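(* In the resource theory of unital maps on a $d$-dimensional Hilbert space, with the currency $\mathcal C=\{C^k\}_{k=1}^d\cup\{\Omega\}$, $C^k=\{\Pi^k/k\}$, $\mathrm{Val}(C^k)=\log d-\log k$, $\mathrm{Val}(\Omega)=0$, for every density operator $\rho$ and every $0\le\varepsilon\le1$, $$\mathrm{Cost}(\mathcal B^\varepsilon(\rho))=\log d-\sup_{\sigma\in\mathcal B^\varepsilon(\rho)}\log\big\lfloor 2^{H_{\min}(\sigma)}\big\rfloor=\log d-\log\big\lfloor 2^{H_{\min}^\varepsilon(\rho)}\big\rfloor.$$
   Context: $\Omega$ is the set of density operators on a Hilbert space of dimension $d$ with fixed orthonormal basis; $\Pi^k$ is the projector onto the first $k$ basis vectors. Allowed transformations: $f_{\mathcal E}(V)=\{\mathcal E(\rho):\rho\in V\}$ for unital CPTP maps $\mathcal E$; $V\to W$ iff some such $\mathcal E$ maps every element of $V$ into $W$. $\mathrm{Cost}(V)=\inf\{\mathrm{Val}(C):C\in\mathcal C,\ C\to V\}$. $\mathcal B^\varepsilon(\rho)=\{\sigma\in\Omega: D(\sigma,\rho)\le\varepsilon\}$ is the closed $\varepsilon$-ball around $\rho$ with respect to a fixed continuous metric $D$ on density operators (e.g. trace distance). $H_{\min}(\sigma)=-\log\lambda_{\max}(\sigma)$ ($\lambda_{\max}$ the largest eigenvalue) and $H^\varepsilon_{\min}(\rho)=\sup_{\sigma\in\mathcal B^\varepsilon(\rho)}H_{\min}(\sigma)$; $\lfloor\cdot\rfloor$ is the floor; logarithms base 2. *)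

theory Defs
  imports "Jordan_Normal_Form.Matrix" "Jordan_Normal_Form.Char_Poly"
    "Jordan_Normal_Form.Schur_Decomposition"
begin

text \<open>Operators on a d-dimensional Hilbert space with fixed orthonormal basis
  e_0,...,e_{d-1} are represented as complex d x d matrices (JNF type mat).\<close>

definition psd :: "nat \<Rightarrow> complex mat \<Rightarrow> bool" where
  "psd n A \<longleftrightarrow> A \<in> carrier_mat n n \<and>
     (\<forall>v \<in> carrier_vec n. let q = (\<Sum>i<n. cnj (v $ i) * (A *\<^sub>v v) $ i) in Im q = 0 \<and> Re q \<ge> 0)"

definition mtrace :: "complex mat \<Rightarrow> complex" where
  "mtrace A = (\<Sum>i<dim_row A. A $$ (i,i))"

definition states :: "nat \<Rightarrow> complex mat set" where
  "states d = {\<rho>. psd d \<rho> \<and> mtrace \<rho> = 1}"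

text \<open>id_k tensor E, acting blockwise on a (k*d) x (k*d) matrix (ancilla as first factor).\<close>
definition ampl :: "nat \<Rightarrow> nat \<Rightarrow> (complex mat \<Rightarrow> complex mat) \<Rightarrow> complex mat \<Rightarrow> complex mat" where
  "ampl d k E M = mat (k*d) (k*d) (\<lambda>(i,j).
      E (mat d d (\<lambda>(p,q). M $$ ((i div d)*d + p, (j div d)*d + q))) $$ (i mod d, j mod d))"

definition linear_map :: "nat \<Rightarrow> (complex mat \<Rightarrow> complex mat) \<Rightarrow> bool" where
  "linear_map d E \<longleftrightarrow>
     (\<forall>A \<in> carrier_mat d d. E A \<in> carrier_mat d d) \<and>
     (\<forall>A \<in> carrier_mat d d. \<forall>B \<in> carrier_mat d d. E (A + B) = E A + E B) \<and>
     (\<forall>A \<in> carrier_mat d d. \<forall>c. E (c \<cdot>\<^sub>m A) = c \<cdot>\<^sub>m E A)"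

definition completely_positive :: "nat \<Rightarrow> (complex mat \<Rightarrow> complex mat) \<Rightarrow> bool" where
  "completely_positive d E \<longleftrightarrow> (\<forall>k M. psd (k*d) M \<longrightarrow> psd (k*d) (ampl d k E M))"

definition trace_preserving :: "nat \<Rightarrow> (complex mat \<Rightarrow> complex mat) \<Rightarrow> bool" where
  "trace_preserving d E \<longleftrightarrow> (\<forall>A \<in> carrier_mat d d. mtrace (E A) = mtrace A)"

definition unital :: "nat \<Rightarrow> (complex mat \<Rightarrow> complex mat) \<Rightarrow> bool" where
  "unital d E \<longleftrightarrow> E (1\<^sub>m d) = 1\<^sub>m d"

definition unital_cptp :: "nat \<Rightarrow> (complex mat \<Rightarrow> complex mat) \<Rightarrow> bool" where
  "unital_cptp d E \<longleftrightarrow> linear_map d E \<and> completely_positive d E \<and>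
     trace_preserving d E \<and> unital d E"

definition converts :: "nat \<Rightarrow> complex mat set \<Rightarrow> complex mat set \<Rightarrow> bool" where
  "converts d V W \<longleftrightarrow> (\<exists>E. unital_cptp d E \<and> (\<forall>\<rho>\<in>V. E \<rho> \<in> W))"

definition proj :: "nat \<Rightarrow> nat \<Rightarrow> complex mat" where
  "proj d k = mat d d (\<lambda>(i,j). if i = j \<and> i < k then 1 else 0)"

definition Ccur :: "nat \<Rightarrow> nat \<Rightarrow> complex mat set" where
  "Ccur d k = {(1 / of_nat k) \<cdot>\<^sub>m proj d k}"

text \<open>Cost(V) = inf {Val(C) : C in currency, C \<rightarrow> V}, with currency
  {C^k : 1 \<le> k \<le> d} \<union> {Omega}, Val(C^k) = log d - log k, Val(Omega) = 0.\<close>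
definition cost :: "nat \<Rightarrow> complex mat set \<Rightarrow> real" where
  "cost d V = Inf ((\<lambda>k. log 2 (real d) - log 2 (real k)) ` {k \<in> {1..d}. converts d (Ccur d k) V}
                   \<union> (if converts d (states d) V then {0} else {}))"

definition lambda_max :: "complex mat \<Rightarrow> real" where
  "lambda_max A = Max (Re ` {e. eigenvalue A e})"

definition Hmin :: "complex mat \<Rightarrow> real" where
  "Hmin \<sigma> = - log 2 (lambda_max \<sigma>)"

definition eball :: "nat \<Rightarrow> (complex mat \<Rightarrow> complex mat \<Rightarrow> real) \<Rightarrow> real \<Rightarrow> complex mat \<Rightarrow> complex mat set" where
  "eball d D \<epsilon> \<rho> = {\<sigma> \<in> states d. D \<sigma> \<rho> \<le> \<epsilon>}"

definition Hmin_eps :: "nat \<Rightarrow> (complex mat \<Rightarrow> complex mat \<Rightarrow> real) \<Rightarrow> real \<Rightarrow> complex mat \<Rightarrow> real" where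
  "Hmin_eps d D \<epsilon> \<rho> = (SUP \<sigma> \<in> eball d D \<epsilon> \<rho>. Hmin \<sigma>)"

definition continuous_metric_on_states :: "nat \<Rightarrow> (complex mat \<Rightarrow> complex mat \<Rightarrow> real) \<Rightarrow> bool" where
  "continuous_metric_on_states d D \<longleftrightarrow>
     (\<forall>x\<in>states d. \<forall>y\<in>states d. D x y \<ge> 0 \<and> (D x y = 0 \<longleftrightarrow> x = y) \<and> D x y = D y x) \<and>
     (\<forall>x\<in>states d. \<forall>y\<in>states d. \<forall>z\<in>states d. D x z \<le> D x y + D y z) \<and>
     (\<forall>x\<in>states d. \<forall>y\<in>states d. \<forall>e>0. \<exists>\<delta>>0. \<forall>x'\<in>states d. \<forall>y'\<in>states d.
        (\<forall>i<d. \<forall>j<d. cmod (x' $$ (i,j) - x $$ (i,j)) < \<delta> \<and> cmod (y' $$ (i,j) - y $$ (i,j)) < \<delta>)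
        \<longrightarrow> \<bar>D x' y' - D x y\<bar> < e)"

end

theory Submission
  imports Defs
begin


definition bf :: "nat \<Rightarrow> complex mat \<Rightarrow> (nat \<Rightarrow> complex) \<Rightarrow> (nat \<Rightarrow> complex) \<Rightarrow> complex" where
  "bf n A x y = (\<Sum>i<n. \<Sum>j<n. cnj (x i) * A$$(i,j) * y j)"

definition nsq :: "nat \<Rightarrow> (nat \<Rightarrow> complex) \<Rightarrow> real" where
  "nsq n x = (\<Sum>i<n. (cmod (x i))^2)"

definition delta :: "nat \<Rightarrow> nat \<Rightarrow> complex" where
  "delta i = (\<lambda>t. if t = i then 1 else 0)"

lemma bf_add1: "bf n A (\<lambda>t. x t + y t) z = bf n A x z + bf n A y z"
  unfolding bf_def by (simp add: distrib_right sum.distrib)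
lemma bf_add2: "bf n A z (\<lambda>t. x t + y t) = bf n A z x + bf n A z y"
  unfolding bf_def by (simp add: distrib_left sum.distrib)
lemma bf_smult1: "bf n A (\<lambda>t. c * x t) z = cnj c * bf n A x z"
  unfolding bf_def by (simp add: sum_distrib_left mult.assoc)
lemma bf_smult2: "bf n A z (\<lambda>t. c * x t) = c * bf n A z x"
  unfolding bf_def by (simp add: sum_distrib_left mult.assoc mult.left_commute)
lemma bf_delta: assumes "i < n" "j < n" shows "bf n A (delta i) (delta j) = A $$ (i,j)"
proof -
  have h: "\<And>a b. a * (if b then 1 else 0) = (if b then a else (0::complex))" by simp
  have h2: "\<And>a b. cnj (if b then 1 else 0) * a = (if b then a else (0::complex))" by simp
  show ?thesis unfolding bf_def delta_def using assms by (simp add: h h2)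
qed

lemma bf_cong: "(\<And>i. i < n \<Longrightarrow> x i = x' i) \<Longrightarrow> (\<And>i. i < n \<Longrightarrow> y i = y' i)
   \<Longrightarrow> (\<And>i j. i < n \<Longrightarrow> j < n \<Longrightarrow> A$$(i,j) = B$$(i,j)) \<Longrightarrow> bf n A x y = bf n B x' y'"
  unfolding bf_def by (intro sum.cong refl) auto

lemma mult_vec_sum: assumes "A \<in> carrier_mat n n" "v \<in> carrier_vec n" "i < n"
  shows "(A *\<^sub>v v) $ i = (\<Sum>j<n. A$$(i,j) * v$j)"
proof -
  have "(A *\<^sub>v v) $ i = row A i \<bullet> v" using assms by simp
  also have "\<dots> = (\<Sum>j<n. A$$(i,j) * v$j)" using assms
    by (simp add: scalar_prod_def lessThan_atLeast0)
  finally show ?thesis .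
qed

lemma psd_iff: "psd n A \<longleftrightarrow> A \<in> carrier_mat n n \<and> (\<forall>x. Im (bf n A x x) = 0 \<and> Re (bf n A x x) \<ge> 0)"
proof -
  have key: "(\<Sum>i<n. cnj (v $ i) * (A *\<^sub>v v) $ i) = bf n A (\<lambda>i. v$i) (\<lambda>i. v$i)"
    if "A \<in> carrier_mat n n" "v \<in> carrier_vec n" for v
    unfolding bf_def using that
    by (intro sum.cong refl, subst mult_vec_sum[OF that]) (simp_all add: sum_distrib_left mult.assoc)
  show ?thesis
  proof
    assume p: "psd n A"
    hence A: "A \<in> carrier_mat n n" unfolding psd_def by auto
    show "A \<in> carrier_mat n n \<and> (\<forall>x. Im (bf n A x x) = 0 \<and> Re (bf n A x x) \<ge> 0)"
    proof (intro conjI allI A)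
      fix x :: "nat \<Rightarrow> complex"
      have v: "vec n x \<in> carrier_vec n" by simp
      have e: "bf n A x x = bf n A (\<lambda>i. vec n x $ i) (\<lambda>i. vec n x $ i)"
        by (rule bf_cong) auto
      from p v have "Im (\<Sum>i<n. cnj (vec n x $ i) * (A *\<^sub>v vec n x) $ i) = 0 \<and> Re (\<Sum>i<n. cnj (vec n x $ i) * (A *\<^sub>v vec n x) $ i) \<ge> 0"
        unfolding psd_def Let_def by blast
      moreover have eq: "bf n A x x = (\<Sum>i<n. cnj (vec n x $ i) * (A *\<^sub>v vec n x) $ i)"
        by (rule trans[OF e key[OF A v, symmetric]])
      ultimately show "Im (bf n A x x) = 0" "Re (bf n A x x) \<ge> 0" by (simp_all only:)
    qed
  next
    assume r: "A \<in> carrier_mat n n \<and> (\<forall>x. Im (bf n A x x) = 0 \<and> Re (bf n A x x) \<ge> 0)"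
    then show "psd n A" unfolding psd_def Let_def using key by auto
  qed
qed

definition herm :: "nat \<Rightarrow> complex mat \<Rightarrow> bool" where
  "herm n A \<longleftrightarrow> (\<forall>i<n. \<forall>j<n. A$$(j,i) = cnj (A$$(i,j)))"

lemma bf_two: "bf n A (\<lambda>t. a * delta i t + b * delta j t) (\<lambda>t. a * delta i t + b * delta j t)
   = cnj a * a * bf n A (delta i) (delta i) + cnj a * b * bf n A (delta i) (delta j)
   + cnj b * a * bf n A (delta j) (delta i) + cnj b * b * bf n A (delta j) (delta j)"
  by (simp add: bf_add1 bf_add2 bf_smult1 bf_smult2 distrib_left add.assoc mult.assoc)

lemma im_e2: "Im (1*1*a + 1*\<i>*b + cnj \<i>*1*c + cnj \<i>*\<i>*d) = Im a + Re b - Re c + Im d" by simp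
lemma im_e1: "Im (1*1*a + 1*1*b + 1*1*c + 1*1*d) = Im a + Im b + Im c + Im d" by simp

lemma psd_herm: assumes "psd n A" shows "herm n A"
  unfolding herm_def
proof (intro allI impI)
  fix i j assume i: "i < n" and j: "j < n"
  from assms have q: "\<And>x. Im (bf n A x x) = 0" unfolding psd_iff by auto
  have ii: "Im (A$$(i,i)) = 0" using q[of "delta i"] bf_delta[OF i i] by simp
  have jj: "Im (A$$(j,j)) = 0" using q[of "delta j"] bf_delta[OF j j] by simp
  have e1: "bf n A (\<lambda>t. 1 * delta i t + 1 * delta j t) (\<lambda>t. 1 * delta i t + 1 * delta j t)
     = 1 * 1 * A$$(i,i) + 1 * 1 * A$$(i,j) + 1 * 1 * A$$(j,i) + 1 * 1 * A$$(j,j)"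
    using bf_two[of n A 1 i 1 j] unfolding bf_delta[OF i i] bf_delta[OF i j] bf_delta[OF j i] bf_delta[OF j j]
    by (simp only: complex_cnj_one)
  have 1: "Im (A$$(i,j) + A$$(j,i)) = 0"
  proof -
    have "Im (bf n A (\<lambda>t. 1 * delta i t + 1 * delta j t) (\<lambda>t. 1 * delta i t + 1 * delta j t)) = 0" by (rule q)
    hence "Im (A$$(i,i)) + Im (A$$(i,j)) + Im (A$$(j,i)) + Im (A$$(j,j)) = 0" unfolding e1 im_e1 .
    thus ?thesis using ii jj by simp
  qed
  have e2: "bf n A (\<lambda>t. 1 * delta i t + \<i> * delta j t) (\<lambda>t. 1 * delta i t + \<i> * delta j t)
     = 1 * 1 * A$$(i,i) + 1 * \<i> * A$$(i,j) + cnj \<i> * 1 * A$$(j,i) + cnj \<i> * \<i> * A$$(j,j)"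
    using bf_two[of n A 1 i \<i> j] unfolding bf_delta[OF i i] bf_delta[OF i j] bf_delta[OF j i] bf_delta[OF j j]
    by (simp only: complex_cnj_one)
  have 2: "Re (A$$(i,j) - A$$(j,i)) = 0"
  proof -
    have "Im (bf n A (\<lambda>t. 1 * delta i t + \<i> * delta j t) (\<lambda>t. 1 * delta i t + \<i> * delta j t)) = 0" by (rule q)
    hence "Im (A$$(i,i)) + Re (A$$(i,j)) - Re (A$$(j,i)) + Im (A$$(j,j)) = 0" unfolding e2 im_e2 .
    thus ?thesis using ii jj by simp
  qed
  have r0: "Re (A$$(i,j)) - Re (A$$(j,i)) = 0" using 2 by (simp only: minus_complex.sel)
  have m0: "Im (A$$(i,j)) + Im (A$$(j,i)) = 0" using 1 by (simp only: plus_complex.sel)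
  have r: "Re (A$$(j,i)) = Re (cnj (A$$(i,j)))" unfolding cnj.simps using r0 by linarith
  have m: "Im (A$$(j,i)) = Im (cnj (A$$(i,j)))" unfolding cnj.simps using m0 by linarith
  show "A$$(j,i) = cnj (A$$(i,j))" using r m by (rule complex_eqI)
qed

lemma hermD: "herm n A \<Longrightarrow> i < n \<Longrightarrow> j < n \<Longrightarrow> A$$(j,i) = cnj (A$$(i,j))"
  unfolding herm_def by blast

lemma bf_herm: assumes "herm n A" shows "bf n A y x = cnj (bf n A x y)"
proof -
  have "bf n A y x = (\<Sum>i<n. \<Sum>j<n. cnj (y i) * A$$(i,j) * x j)" unfolding bf_def ..
  also have "\<dots> = (\<Sum>j<n. \<Sum>i<n. cnj (y i) * A$$(i,j) * x j)" by (rule sum.swap)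
  also have "\<dots> = (\<Sum>j<n. \<Sum>i<n. cnj (cnj (x j) * A$$(j,i) * y i))"
  proof (intro sum.cong refl)
    fix j i assume "j \<in> {..<n}" "i \<in> {..<n}"
    then have "A$$(i,j) = cnj (A$$(j,i))" using hermD[OF assms] by blast
    then show "cnj (y i) * A$$(i,j) * x j = cnj (cnj (x j) * A$$(j,i) * y i)"
      by (simp add: mult.commute mult.left_commute)
  qed
  also have "\<dots> = cnj (bf n A x y)" unfolding bf_def by simp
  finally show ?thesis .
qed

lemma herm_bf_real: "herm n A \<Longrightarrow> Im (bf n A x x) = 0"
proof -
  assume "herm n A"
  from bf_herm[OF this, of x x] have "Im (bf n A x x) = Im (cnj (bf n A x x))" by simp
  then show ?thesis by simp
qed



lemma bf_expand: "bf n A (\<lambda>t. x t + z * y t) (\<lambda>t. x t + z * y t)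
  = bf n A x x + z * bf n A x y + cnj z * bf n A y x + cnj z * z * bf n A y y"
  by (simp add: bf_add1 bf_add2 bf_smult1 bf_smult2 distrib_left add.assoc mult.assoc)

lemma psd_re_nonneg: "psd n A \<Longrightarrow> Re (bf n A x x) \<ge> 0"
  unfolding psd_iff by blast
lemma psd_im: "psd n A \<Longrightarrow> Im (bf n A x x) = 0"
  unfolding psd_iff by blast
lemma psd_bf_real: "psd n A \<Longrightarrow> bf n A x x = of_real (Re (bf n A x x))"
  using psd_im[of n A x] by (simp add: complex_eq_iff)

lemma quad_nonneg_imp:
  fixes a B c :: real
  assumes "\<And>s. 0 \<le> a - 2 * s * B + s^2 * B * c" "B \<ge> 0" "a \<ge> 0" "c \<ge> 0"
  shows "B \<le> a * c"
proof (cases "B = 0")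
  case True then show ?thesis using assms by simp
next
  case False
  hence Bp: "B > 0" using assms by simp
  show ?thesis
  proof (cases "c = 0")
    case True
    have "0 \<le> a - 2 * ((a+1)/(2*B)) * B + ((a+1)/(2*B))^2 * B * c" by (rule assms(1))
    also have "\<dots> = -1" using True Bp by (simp add: field_simps)
    finally show ?thesis by simp
  next
    case False
    hence cp: "c > 0" using assms by simp
    have "0 \<le> a - 2 * (1/c) * B + (1/c)^2 * B * c" by (rule assms(1))
    also have "\<dots> = a - B / c" using cp by (simp add: field_simps power2_eq_square)
    finally have "B / c \<le> a" by simp
    then show ?thesis using cp by (simp add: field_simps mult.commute)
  qed
qed

lemma psd_cs: assumes p: "psd n A"
  shows "(cmod (bf n A x y))^2 \<le> Re (bf n A x x) * Re (bf n A y y)"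
proof -
  define b where "b = bf n A x y"
  have h: "herm n A" using psd_herm[OF p] .
  have yx: "bf n A y x = cnj b" unfolding b_def by (rule bf_herm[OF h])
  have yy: "bf n A y y = of_real (Re (bf n A y y))" by (rule psd_bf_real[OF p])
  have xx: "bf n A x x = of_real (Re (bf n A x x))" by (rule psd_bf_real[OF p])
  have bb: "cnj b * b = of_real ((cmod b)^2)" by (metis complex_norm_square mult.commute of_real_power)
  have key: "0 \<le> Re (bf n A x x) - 2 * s * (cmod b)^2 + s^2 * (cmod b)^2 * Re (bf n A y y)" for s :: real
  proof -
    define z where "z = - (of_real s) * cnj b"
    have "0 \<le> Re (bf n A (\<lambda>t. x t + z * y t) (\<lambda>t. x t + z * y t))" by (rule psd_re_nonneg[OF p])
    also have "bf n A (\<lambda>t. x t + z * y t) (\<lambda>t. x t + z * y t)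
       = bf n A x x + z * b + cnj z * cnj b + cnj z * z * bf n A y y"
      unfolding bf_expand b_def[symmetric] yx ..
    also have "z * b = - of_real (s * (cmod b)^2)" unfolding z_def using bb by (simp add: mult.commute mult.left_commute)
    also have "cnj z * cnj b = - of_real (s * (cmod b)^2)" unfolding z_def using bb by (simp add: mult.commute mult.left_commute)
    also have "cnj z * z = of_real (s^2 * (cmod b)^2)" unfolding z_def using bb
      by (simp add: mult.commute mult.left_commute power2_eq_square)
    finally show ?thesis by (simp add: algebra_simps)
  qed
  have "(cmod b)^2 \<le> Re (bf n A x x) * Re (bf n A y y)"
    by (rule quad_nonneg_imp[OF key]) (auto intro: psd_re_nonneg[OF p])
  then show ?thesis unfolding b_def .
qed



lemma subseq_conv_real:
  fixes f :: "nat \<Rightarrow> 'c \<Rightarrow> real"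
  assumes "finite S" and "\<And>c. c \<in> S \<Longrightarrow> \<exists>B. \<forall>n. \<bar>f n c\<bar> \<le> B"
  shows "\<exists>r. strict_mono r \<and> (\<forall>c\<in>S. convergent (\<lambda>n. f (r n) c))"
  using assms
proof (induction S rule: finite_induct)
  case empty
  show ?case by (rule exI[of _ id]) (simp add: strict_mono_def)
next
  case (insert c S)
  then obtain r where r: "strict_mono r" "\<forall>c\<in>S. convergent (\<lambda>n. f (r n) c)" by blast
  obtain B where B: "\<forall>n. \<bar>f n c\<bar> \<le> B" using insert.prems by blast
  obtain r' where r': "strict_mono r'" "monoseq (\<lambda>n. f (r (r' n)) c)"
    using seq_monosub[of "\<lambda>n. f (r n) c"] by blast
  have "Bseq (\<lambda>n. f (r (r' n)) c)" by (rule BseqI'[of _ B]) (use B in simp)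
  hence cc: "convergent (\<lambda>n. f (r (r' n)) c)" using r'(2) Bseq_monoseq_convergent by blast
  have "convergent (\<lambda>n. f (r (r' n)) c')" if "c' \<in> S" for c'
    using convergent_subseq_convergent[OF r(2)[rule_format, OF that] r'(1)] by (simp add: comp_def)
  then show ?case using cc strict_mono_compose[OF r(1) r'(1)]
    by (intro exI[of _ "\<lambda>x. r (r' x)"]) auto
qed

lemma subseq_conv_complex:
  fixes f :: "nat \<Rightarrow> 'c \<Rightarrow> complex"
  assumes "finite S" and "\<And>c n. c \<in> S \<Longrightarrow> cmod (f n c) \<le> B"
  shows "\<exists>r. strict_mono r \<and> (\<forall>c\<in>S. \<exists>l. (\<lambda>n. f (r n) c) \<longlonglongrightarrow> l)"
proof -
  define g where "g n p = (if snd p then Re (f n (fst p)) else Im (f n (fst p)))" for n p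
  have "finite (S \<times> (UNIV :: bool set))" using assms(1) by simp
  moreover have "\<exists>B. \<forall>n. \<bar>g n p\<bar> \<le> B" if "p \<in> S \<times> UNIV" for p
    using that assms(2) abs_Re_le_cmod abs_Im_le_cmod unfolding g_def
    by (intro exI[of _ B]) (auto intro: order.trans[OF abs_Re_le_cmod] order.trans[OF abs_Im_le_cmod])
  ultimately obtain r where r: "strict_mono r" "\<forall>p\<in>S \<times> UNIV. convergent (\<lambda>n. g (r n) p)"
    using subseq_conv_real[of "S \<times> UNIV" g] by blast
  have "\<exists>l. (\<lambda>n. f (r n) c) \<longlonglongrightarrow> l" if c: "c \<in> S" for c
  proof -
    have "convergent (\<lambda>n. g (r n) (c, True))" "convergent (\<lambda>n. g (r n) (c, False))" using r c by auto
    then obtain a b where a: "(\<lambda>n. Re (f (r n) c)) \<longlonglongrightarrow> a" and b: "(\<lambda>n. Im (f (r n) c)) \<longlonglongrightarrow> b"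
      unfolding g_def convergent_def by auto
    have "(\<lambda>n. Complex (Re (f (r n) c)) (Im (f (r n) c))) \<longlonglongrightarrow> Complex a b"
      by (rule tendsto_Complex[OF a b])
    then show ?thesis by auto
  qed
  then show ?thesis using r(1) by blast
qed

lemma cnj_if01 [simp]: "cnj (if b then 1 else 0) * (a::complex) = (if b then a else 0)" by simp
lemma if01_mult [simp]: "(a::complex) * (if b then 1 else 0) = (if b then a else 0)" by simp
lemma if0_mult [simp]: "(if b then a else 0) * (c::complex) = (if b then a*c else 0)" by simp

lemma bf_mat_comb:
  "bf n (mat n n (\<lambda>(i,j). a * B$$(i,j) + b * C$$(i,j))) x y = a * bf n B x y + b * bf n C x y"
proof -
  have "bf n (mat n n (\<lambda>(i,j). a * B$$(i,j) + b * C$$(i,j))) x y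
     = (\<Sum>i<n. \<Sum>j<n. a * (cnj (x i) * B$$(i,j) * y j) + b * (cnj (x i) * C$$(i,j) * y j))"
    unfolding bf_def by (intro sum.cong refl) (simp add: distrib_left distrib_right mult.assoc mult.left_commute)
  then show ?thesis by (simp add: sum.distrib sum_distrib_left bf_def)
qed

lemma bf_delta_left: assumes "i < n" shows "bf n A (delta i) y = (\<Sum>j<n. A$$(i,j) * y j)"
proof -
  have "bf n A (delta i) y = (\<Sum>ia<n. if ia = i then (\<Sum>j<n. A$$(ia,j) * y j) else 0)"
    unfolding bf_def delta_def
  proof (intro sum.cong refl)
    fix ia assume "ia \<in> {..<n}"
    show "(\<Sum>j<n. cnj (if ia = i then 1 else 0) * A $$ (ia, j) * y j) = (if ia = i then (\<Sum>j<n. A$$(ia,j) * y j) else 0)"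
      by (cases "ia = i") simp_all
  qed
  also have "\<dots> = (\<Sum>j<n. A$$(i,j) * y j)" using assms by simp
  finally show ?thesis .
qed

lemma bf_one: "bf n (1\<^sub>m n) x y = (\<Sum>i<n. cnj (x i) * y i)"
proof -
  have h: "\<And>a b. a * (if b then 1 else 0) = (if b then a else (0::complex))" by simp
  have h3: "\<And>a b c. (if b then a else 0) * c = (if b then a * c else (0::complex))" by simp
  show ?thesis unfolding bf_def by (intro sum.cong refl) (simp add: h h3)
qed

lemma bf_one_delta: "i < n \<Longrightarrow> bf n (1\<^sub>m n) (delta i) y = y i"
  unfolding bf_one delta_def by simp

lemma nsq_bf: "bf n (1\<^sub>m n) x x = of_real (nsq n x)"
  unfolding bf_one nsq_def of_real_sum
  by (intro sum.cong refl) (metis complex_norm_square mult.commute of_real_power)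

lemma nsq_nonneg: "nsq n x \<ge> 0" unfolding nsq_def by (simp add: sum_nonneg)

lemma nsq_zero: "nsq n x = 0 \<Longrightarrow> i < n \<Longrightarrow> x i = 0"
  unfolding nsq_def by (subst (asm) sum_nonneg_eq_0_iff) auto

lemma coord_le_nsq: "i < n \<Longrightarrow> (cmod (x i))^2 \<le> nsq n x"
  unfolding nsq_def by (rule member_le_sum) auto

lemma bf_zero_vec: assumes "\<And>i. i < n \<Longrightarrow> x i = 0" shows "bf n A x y = 0"
  unfolding bf_def using assms by simp

lemma nsq_smult: "nsq n (\<lambda>t. c * x t) = (cmod c)^2 * nsq n x"
  unfolding nsq_def by (simp add: sum_distrib_left norm_mult power_mult_distrib)

lemma bf_smult_both: "bf n A (\<lambda>t. c * x t) (\<lambda>t. c * x t) = of_real ((cmod c)^2) * bf n A x x"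
proof -
  have "bf n A (\<lambda>t. c * x t) (\<lambda>t. c * x t) = cnj c * (c * bf n A x x)"
    by (simp add: bf_smult1 bf_smult2)
  also have "\<dots> = (cnj c * c) * bf n A x x" by simp
  also have "cnj c * c = of_real ((cmod c)^2)" by (metis complex_norm_square mult.commute of_real_power)
  finally show ?thesis .
qed

lemma nsq_delta: "i < n \<Longrightarrow> nsq n (delta i) = 1"
  unfolding nsq_def delta_def by (simp add: if_distrib[of "\<lambda>z. (cmod z)^2"] cong: if_cong)



lemma bf_norm_bound: assumes "\<And>i. i < n \<Longrightarrow> cmod (x i) \<le> 1"
  shows "cmod (bf n A x x) \<le> (\<Sum>i<n. \<Sum>j<n. cmod (A$$(i,j)))"
proof -
  have "cmod (bf n A x x) \<le> (\<Sum>i<n. cmod (\<Sum>j<n. cnj (x i) * A$$(i,j) * x j))"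
    unfolding bf_def by (rule norm_sum)
  also have "\<dots> \<le> (\<Sum>i<n. \<Sum>j<n. cmod (cnj (x i) * A$$(i,j) * x j))"
    by (intro sum_mono norm_sum)
  also have "\<dots> \<le> (\<Sum>i<n. \<Sum>j<n. cmod (A$$(i,j)))"
  proof (intro sum_mono)
    fix i j assume i: "i \<in> {..<n}" and j: "j \<in> {..<n}"
    have "cmod (cnj (x i) * A$$(i,j) * x j) = cmod (x i) * cmod (A$$(i,j)) * cmod (x j)"
      by (simp add: norm_mult)
    also have "\<dots> \<le> 1 * cmod (A$$(i,j)) * 1"
    proof -
      have a1: "cmod (x i) \<le> 1" using assms i by blast
      have a2: "cmod (x j) \<le> 1" using assms j by blast
      have s1: "cmod (x i) * cmod (A$$(i,j)) \<le> 1 * cmod (A$$(i,j))"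
        by (rule mult_mono[OF a1 order_refl zero_le_one norm_ge_zero])
      show ?thesis by (rule mult_mono[OF s1 a2]) simp_all
    qed
    finally show "cmod (cnj (x i) * A$$(i,j) * x j) \<le> cmod (A$$(i,j))" by simp
  qed
  finally show ?thesis .
qed

lemma coord_le1: "nsq n x = 1 \<Longrightarrow> i < n \<Longrightarrow> cmod (x i) \<le> 1"
  using coord_le_nsq[of i n x] by (rule_tac power2_le_imp_le) simp_all

lemma ray:
  assumes h: "herm n A" and n: "0 < n"
  shows "\<exists>m u. nsq n u = 1 \<and> (\<forall>i<n. (\<Sum>j<n. A$$(i,j) * u j) = of_real m * u i)
              \<and> (\<forall>x. Re (bf n A x x) \<le> m * nsq n x)"
proof -
  define U where "U = {x. nsq n x = 1}"
  define R where "R x = Re (bf n A x x)" for x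
  define K where "K = (\<Sum>i<n. \<Sum>j<n. cmod (A$$(i,j)))"
  have bound: "R x \<le> K" if "x \<in> U" for x
  proof -
    have "R x \<le> cmod (bf n A x x)" unfolding R_def by (rule complex_Re_le_cmod)
    also have "\<dots> \<le> K" unfolding K_def
      by (rule bf_norm_bound) (use that coord_le1 in \<open>auto simp: U_def\<close>)
    finally show ?thesis .
  qed
  have Une: "delta 0 \<in> U" unfolding U_def using nsq_delta[OF n] by simp
  define m where "m = Sup (R ` U)"
  have bdd: "bdd_above (R ` U)" using bound by (auto simp: bdd_above_def)
  have upper: "R x \<le> m" if "x \<in> U" for x
    unfolding m_def by (rule cSup_upper) (use that bdd in auto)
  have "\<exists>x\<in>U. m - inverse (real (Suc k)) < R x" for k
  proof -
    have "m - inverse (real (Suc k)) < Sup (R ` U)" unfolding m_def by simp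
    then show ?thesis using Une by (subst (asm) less_cSup_iff[OF _ bdd]) auto
  qed
  then obtain X where X: "\<And>k. X k \<in> U" "\<And>k. m - inverse (real (Suc k)) < R (X k)"
    by metis
  obtain r where r: "strict_mono r" "\<forall>i\<in>{..<n}. \<exists>l. (\<lambda>k. X (r k) i) \<longlonglongrightarrow> l"
    using subseq_conv_complex[of "{..<n}" X 1] X(1) coord_le1 unfolding U_def by blast
  define u where "u i = (if i < n then lim (\<lambda>k. X (r k) i) else 0)" for i
  have conv: "(\<lambda>k. X (r k) i) \<longlonglongrightarrow> u i" if "i < n" for i
    using r(2) that unfolding u_def by (auto intro: limI simp: convergent_LIMSEQ_iff[symmetric] convergent_def)
  have "(\<lambda>k. nsq n (X (r k))) \<longlonglongrightarrow> nsq n u"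
    unfolding nsq_def by (intro tendsto_sum tendsto_power tendsto_norm conv) simp
  moreover have "(\<lambda>k. nsq n (X (r k))) = (\<lambda>k. 1)" using X(1) unfolding U_def by simp
  ultimately have nu: "nsq n u = 1" using LIMSEQ_unique tendsto_const by metis
  have Rlim: "(\<lambda>k. R (X (r k))) \<longlonglongrightarrow> R u"
    unfolding R_def bf_def
    by (intro tendsto_Re tendsto_sum tendsto_mult tendsto_cnj tendsto_const conv) simp_all
  have low: "m - inverse (real (Suc k)) \<le> R (X (r k))" for k
  proof -
    have "k \<le> r k" using r(1) by (rule seq_suble)
    hence "inverse (real (Suc (r k))) \<le> inverse (real (Suc k))" by (simp add: le_imp_inverse_le)
    thus ?thesis using X(2)[of "r k"] by linarith
  qed
  have "(\<lambda>k. m - inverse (real (Suc k))) \<longlonglongrightarrow> m - 0"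
    by (intro tendsto_diff tendsto_const LIMSEQ_inverse_real_of_nat)
  hence "m \<le> R u" using Rlim low by (intro LIMSEQ_le) auto
  moreover have "R u \<le> m" using upper nu unfolding U_def by simp
  ultimately have Ru: "R u = m" by simp
  have glob: "R x \<le> m * nsq n x" for x
  proof (cases "nsq n x = 0")
    case True
    hence "bf n A x x = 0" using nsq_zero by (intro bf_zero_vec) auto
    thus ?thesis using True unfolding R_def by simp
  next
    case False
    hence sp: "nsq n x > 0" using nsq_nonneg[of n x] by simp
    define c where "c = complex_of_real (1 / sqrt (nsq n x))"
    have cc: "(cmod c)^2 = 1 / nsq n x" unfolding c_def norm_of_real power2_abs using sp
      by (simp add: power_divide del: of_real_divide)
    have "nsq n (\<lambda>t. c * x t) = 1" unfolding nsq_smult cc using sp by simp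
    hence "R (\<lambda>t. c * x t) \<le> m" using upper unfolding U_def by simp
    moreover have "R (\<lambda>t. c * x t) = R x / nsq n x"
      unfolding R_def bf_smult_both cc by simp
    ultimately show ?thesis using sp by (simp add: divide_le_eq mult.commute)
  qed
  define C where "C = mat n n (\<lambda>(i,j). of_real m * (1\<^sub>m n)$$(i,j) + (-1) * A$$(i,j))"
  have bfC: "bf n C x y = of_real m * bf n (1\<^sub>m n) x y - bf n A x y" for x y
    unfolding C_def bf_mat_comb by simp
  have psdC: "psd n C"
    unfolding psd_iff
  proof (intro conjI allI)
    show "C \<in> carrier_mat n n" unfolding C_def by simp
    fix x
    have e: "bf n C x x = of_real (m * nsq n x) - bf n A x x" unfolding bfC nsq_bf by simp
    show "Im (bf n C x x) = 0" unfolding e using herm_bf_real[OF h] by simp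
    show "Re (bf n C x x) \<ge> 0" unfolding e using glob[of x] unfolding R_def by simp
  qed
  have Cu: "Re (bf n C u u) = 0" unfolding bfC nsq_bf using Ru nu unfolding R_def by simp
  have eig: "(\<Sum>j<n. A$$(i,j) * u j) = of_real m * u i" if i: "i < n" for i
  proof -
    have "(cmod (bf n C (delta i) u))^2 \<le> Re (bf n C (delta i) (delta i)) * Re (bf n C u u)"
      by (rule psd_cs[OF psdC])
    hence "bf n C (delta i) u = 0" unfolding Cu by simp
    hence "of_real m * bf n (1\<^sub>m n) (delta i) u - bf n A (delta i) u = 0" by (simp only: bfC)
    thus ?thesis unfolding bf_one_delta[OF i] unfolding bf_delta_left[OF i] by simp
  qed
  show ?thesis using nu eig glob unfolding R_def by blast
qed



lemma eig_finite: fixes A :: "complex mat" assumes A: "A \<in> carrier_mat n n" shows "finite {e. eigenvalue A e}"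
proof -
  have "char_poly A \<noteq> 0" using degree_monic_char_poly[OF A] by auto
  then show ?thesis unfolding eigenvalue_root_char_poly[OF A] by (rule poly_roots_finite)
qed

lemma bf_mult_vec: assumes A: "A \<in> carrier_mat n n"
  shows "bf n A x x = (\<Sum>i<n. cnj (x i) * (\<Sum>j<n. A$$(i,j) * x j))"
  unfolding bf_def by (intro sum.cong refl) (simp add: sum_distrib_left mult.assoc)

lemma nsq_pos: assumes "i < n" "x i \<noteq> 0" shows "nsq n x > 0"
proof -
  have "0 < (cmod (x i))^2" using assms by simp
  also have "\<dots> \<le> nsq n x" by (rule coord_le_nsq[OF assms(1)])
  finally show ?thesis .
qed

lemma lmax:
  assumes A: "A \<in> carrier_mat n n" and h: "herm n A" and n: "0 < n"
  shows "(\<forall>x. Re (bf n A x x) \<le> lambda_max A * nsq n x)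
       \<and> (\<exists>u. nsq n u = 1 \<and> (\<forall>i<n. (\<Sum>j<n. A$$(i,j) * u j) = of_real (lambda_max A) * u i))"
proof -
  obtain m u where nu: "nsq n u = 1" and eu: "\<And>i. i < n \<Longrightarrow> (\<Sum>j<n. A$$(i,j) * u j) = of_real m * u i"
    and gl: "\<And>x. Re (bf n A x x) \<le> m * nsq n x"
    using ray[OF h n] by blast
  have dA: "dim_row A = n" using A by simp
  have ev_m: "eigenvalue A (of_real m)"
    unfolding eigenvalue_def eigenvector_def dA
  proof (intro exI conjI)
    show "vec n u \<in> carrier_vec n" by simp
    show "vec n u \<noteq> 0\<^sub>v n"
    proof
      assume "vec n u = 0\<^sub>v n"
      hence "\<And>i. i < n \<Longrightarrow> u i = 0" by (metis index_vec index_zero_vec(1))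
      hence "nsq n u = 0" unfolding nsq_def by simp
      with nu show False by simp
    qed
    show "A *\<^sub>v vec n u = of_real m \<cdot>\<^sub>v vec n u"
    proof (rule eq_vecI)
      show "dim_vec (A *\<^sub>v vec n u) = dim_vec (of_real m \<cdot>\<^sub>v vec n u)" using A by simp
      fix i assume "i < dim_vec (of_real m \<cdot>\<^sub>v vec n u)"
      hence i: "i < n" by simp
      have "(A *\<^sub>v vec n u) $ i = (\<Sum>j<n. A$$(i,j) * vec n u $ j)" by (rule mult_vec_sum[OF A _ i]) simp
      also have "\<dots> = (\<Sum>j<n. A$$(i,j) * u j)" by (intro sum.cong refl) simp
      also have "\<dots> = of_real m * u i" by (rule eu[OF i])
      finally show "(A *\<^sub>v vec n u) $ i = (of_real m \<cdot>\<^sub>v vec n u) $ i" using i by simp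
    qed
  qed
  have le_m: "Re e \<le> m" if ev: "eigenvalue A e" for e
  proof -
    obtain v where v: "v \<in> carrier_vec n" "v \<noteq> 0\<^sub>v n" "A *\<^sub>v v = e \<cdot>\<^sub>v v"
      using ev unfolding eigenvalue_def eigenvector_def dA by blast
    define x where "x i = v $ i" for i
    have "\<exists>i<n. x i \<noteq> 0"
    proof (rule ccontr)
      assume "\<not> (\<exists>i<n. x i \<noteq> 0)"
      hence "v = 0\<^sub>v n" using v(1) unfolding x_def by (intro eq_vecI) auto
      with v(2) show False by simp
    qed
    then obtain i where "i < n" "x i \<noteq> 0" by blast
    hence sp: "nsq n x > 0" by (rule nsq_pos)
    have "bf n A x x = (\<Sum>i<n. cnj (x i) * (\<Sum>j<n. A$$(i,j) * x j))" by (rule bf_mult_vec[OF A])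
    also have "\<dots> = (\<Sum>i<n. e * (cnj (x i) * x i))"
    proof (intro sum.cong refl)
      fix i assume "i \<in> {..<n}"
      hence i: "i < n" by simp
      have "(\<Sum>j<n. A$$(i,j) * x j) = (A *\<^sub>v v) $ i" unfolding x_def by (rule mult_vec_sum[OF A v(1) i, symmetric])
      also have "\<dots> = e * x i" unfolding v(3) x_def using v(1) i by simp
      finally show "cnj (x i) * (\<Sum>j<n. A$$(i,j) * x j) = e * (cnj (x i) * x i)" by simp
    qed
    also have "\<dots> = e * bf n (1\<^sub>m n) x x" unfolding bf_one by (simp add: sum_distrib_left)
    also have "\<dots> = e * of_real (nsq n x)" unfolding nsq_bf ..
    finally have "Re (bf n A x x) = Re e * nsq n x" by simp
    with gl[of x] sp show ?thesis by simp
  qed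
  have "lambda_max A = m"
    unfolding lambda_max_def
  proof (rule Max_eqI)
    show "finite (Re ` {e. eigenvalue A e})" using eig_finite[OF A] by simp
    show "y \<le> m" if "y \<in> Re ` {e. eigenvalue A e}" for y using that le_m by auto
    show "m \<in> Re ` {e. eigenvalue A e}" using ev_m by (intro image_eqI[of _ _ "of_real m"]) auto
  qed
  then show ?thesis using nu eu gl by auto
qed



definition shm :: "nat \<Rightarrow> real \<Rightarrow> complex mat \<Rightarrow> complex mat" where
  "shm n c A = mat n n (\<lambda>(i,j). of_real c * (1\<^sub>m n)$$(i,j) + (-1) * A$$(i,j))"

lemma bf_shm: "bf n (shm n c A) x y = of_real c * bf n (1\<^sub>m n) x y - bf n A x y"
  unfolding shm_def bf_mat_comb by simp

lemma bf_eig: assumes A: "A \<in> carrier_mat n n" and e: "\<And>i. i < n \<Longrightarrow> (\<Sum>j<n. A$$(i,j) * u j) = a * u i"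
  shows "bf n A u u = a * of_real (nsq n u)"
proof -
  have "bf n A u u = (\<Sum>i<n. cnj (u i) * (\<Sum>j<n. A$$(i,j) * u j))" by (rule bf_mult_vec[OF A])
  also have "\<dots> = (\<Sum>i<n. a * (cnj (u i) * u i))" using e by (intro sum.cong refl) simp
  also have "\<dots> = a * bf n (1\<^sub>m n) u u" unfolding bf_one by (simp add: sum_distrib_left)
  finally show ?thesis unfolding nsq_bf .
qed

lemma psd_shm_iff:
  assumes A: "A \<in> carrier_mat n n" and h: "herm n A" and n: "0 < n"
  shows "psd n (shm n c A) \<longleftrightarrow> lambda_max A \<le> c"
proof -
  note L = lmax[OF A h n]
  show ?thesis
  proof
    assume p: "psd n (shm n c A)"
    obtain u where nu: "nsq n u = 1" and eu: "\<And>i. i < n \<Longrightarrow> (\<Sum>j<n. A$$(i,j) * u j) = of_real (lambda_max A) * u i"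
      using L by blast
    have "bf n A u u = of_real (lambda_max A)" using bf_eig[OF A eu] nu by simp
    moreover have "Re (bf n (shm n c A) u u) \<ge> 0" using p by (rule psd_re_nonneg)
    ultimately show "lambda_max A \<le> c" unfolding bf_shm nsq_bf nu by simp
  next
    assume le: "lambda_max A \<le> c"
    show "psd n (shm n c A)" unfolding psd_iff
    proof (intro conjI allI)
      show "shm n c A \<in> carrier_mat n n" unfolding shm_def by simp
      fix x
      have e: "bf n (shm n c A) x x = of_real (c * nsq n x) - bf n A x x" unfolding bf_shm nsq_bf by simp
      show "Im (bf n (shm n c A) x x) = 0" unfolding e using herm_bf_real[OF h] by simp
      have "Re (bf n A x x) \<le> lambda_max A * nsq n x" using L by blast
      also have "\<dots> \<le> c * nsq n x" using le nsq_nonneg[of n x] by (rule mult_right_mono)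
      finally show "Re (bf n (shm n c A) x x) \<ge> 0" unfolding e by simp
    qed
  qed
qed

lemma st_carrier: "\<sigma> \<in> states d \<Longrightarrow> \<sigma> \<in> carrier_mat d d"
  unfolding states_def psd_def by auto
lemma st_psd: "\<sigma> \<in> states d \<Longrightarrow> psd d \<sigma>"
  unfolding states_def by auto
lemma st_herm: "\<sigma> \<in> states d \<Longrightarrow> herm d \<sigma>"
  using st_psd psd_herm by blast
lemma st_trace: assumes "\<sigma> \<in> states d" shows "(\<Sum>i<d. \<sigma>$$(i,i)) = 1"
  using assms st_carrier[OF assms] unfolding states_def mtrace_def by simp

lemma st_diag: assumes "\<sigma> \<in> states d" "i < d"
  shows "\<sigma>$$(i,i) = of_real (Re (\<sigma>$$(i,i)))" "Re (\<sigma>$$(i,i)) \<ge> 0"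
proof -
  have b: "bf d \<sigma> (delta i) (delta i) = \<sigma>$$(i,i)" using bf_delta assms(2) by blast
  show "\<sigma>$$(i,i) = of_real (Re (\<sigma>$$(i,i)))" using psd_bf_real[OF st_psd[OF assms(1)], of "delta i"] unfolding b .
  show "Re (\<sigma>$$(i,i)) \<ge> 0" using psd_re_nonneg[OF st_psd[OF assms(1)], of "delta i"] unfolding b .
qed

lemma st_trace_re: assumes "\<sigma> \<in> states d" shows "(\<Sum>i<d. Re (\<sigma>$$(i,i))) = 1"
proof -
  have "(\<Sum>i<d. Re (\<sigma>$$(i,i))) = Re (\<Sum>i<d. \<sigma>$$(i,i))" by simp
  also have "\<dots> = 1" unfolding st_trace[OF assms] by simp
  finally show ?thesis .
qed

lemma st_diag_le1: assumes "\<sigma> \<in> states d" "i < d" shows "Re (\<sigma>$$(i,i)) \<le> 1"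
proof -
  have "Re (\<sigma>$$(i,i)) \<le> (\<Sum>i<d. Re (\<sigma>$$(i,i)))"
    by (rule member_le_sum) (use assms st_diag in auto)
  then show ?thesis unfolding st_trace_re[OF assms(1)] .
qed

lemma st_entry: assumes "\<sigma> \<in> states d" "i < d" "j < d" shows "cmod (\<sigma>$$(i,j)) \<le> 1"
proof -
  have "(cmod (bf d \<sigma> (delta i) (delta j)))^2 \<le> Re (bf d \<sigma> (delta i) (delta i)) * Re (bf d \<sigma> (delta j) (delta j))"
    by (rule psd_cs[OF st_psd[OF assms(1)]])
  hence "(cmod (\<sigma>$$(i,j)))^2 \<le> Re (\<sigma>$$(i,i)) * Re (\<sigma>$$(j,j))"
    using bf_delta assms(2,3) by metis
  also have "\<dots> \<le> 1 * 1"
    using st_diag_le1[OF assms(1)] st_diag(2)[OF assms(1)] assms(2,3) by (intro mult_mono) auto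
  finally show ?thesis by (rule_tac power2_le_imp_le) simp_all
qed

lemma st_lmax:
  assumes s: "\<sigma> \<in> states d" and d: "0 < d"
  shows "1 \<le> real d * lambda_max \<sigma>" "0 < lambda_max \<sigma>" "lambda_max \<sigma> \<le> 1"
proof -
  note A = st_carrier[OF s] and h = st_herm[OF s]
  note L = lmax[OF A h d]
  have di: "Re (\<sigma>$$(i,i)) \<le> lambda_max \<sigma>" if i: "i < d" for i
  proof -
    have "Re (bf d \<sigma> (delta i) (delta i)) \<le> lambda_max \<sigma> * nsq d (delta i)" using L by blast
    thus ?thesis unfolding bf_delta[OF i i] nsq_delta[OF i] by simp
  qed
  have "1 = (\<Sum>i<d. Re (\<sigma>$$(i,i)))" using st_trace_re[OF s] by simp
  also have "\<dots> \<le> (\<Sum>i<d. lambda_max \<sigma>)" using di by (intro sum_mono) auto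
  also have "\<dots> = real d * lambda_max \<sigma>" by simp
  finally show g: "1 \<le> real d * lambda_max \<sigma>" .
  show pos: "0 < lambda_max \<sigma>"
  proof (rule ccontr)
    assume "\<not> 0 < lambda_max \<sigma>"
    hence "real d * lambda_max \<sigma> \<le> 0" by (simp add: mult_nonneg_nonpos)
    with g show False by simp
  qed
  obtain u where nu: "nsq d u = 1" and eu: "\<And>i. i < d \<Longrightarrow> (\<Sum>j<d. \<sigma>$$(i,j) * u j) = of_real (lambda_max \<sigma>) * u i"
    using L by blast
  have buu: "bf d \<sigma> u u = of_real (lambda_max \<sigma>)" using bf_eig[OF A eu] nu by simp
  have ui: "lambda_max \<sigma> * (cmod (u i))^2 \<le> Re (\<sigma>$$(i,i))" if i: "i < d" for i
  proof -
    have "(cmod (bf d \<sigma> (delta i) u))^2 \<le> Re (bf d \<sigma> (delta i) (delta i)) * Re (bf d \<sigma> u u)"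
      by (rule psd_cs[OF st_psd[OF s]])
    hence "(cmod (of_real (lambda_max \<sigma>) * u i))^2 \<le> Re (\<sigma>$$(i,i)) * lambda_max \<sigma>"
      unfolding bf_delta[OF i i] buu unfolding bf_delta_left[OF i] eu[OF i] by simp
    hence "lambda_max \<sigma> * (lambda_max \<sigma> * (cmod (u i))^2) \<le> lambda_max \<sigma> * Re (\<sigma>$$(i,i))"
      using pos by (simp add: norm_mult power_mult_distrib power2_eq_square algebra_simps)
    thus ?thesis using pos by simp
  qed
  have "lambda_max \<sigma> = lambda_max \<sigma> * nsq d u" using nu by simp
  also have "\<dots> = (\<Sum>i<d. lambda_max \<sigma> * (cmod (u i))^2)" unfolding nsq_def by (simp add: sum_distrib_left)
  also have "\<dots> \<le> (\<Sum>i<d. Re (\<sigma>$$(i,i)))" using ui by (intro sum_mono) auto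
  also have "\<dots> = 1" by (rule st_trace_re[OF s])
  finally show "lambda_max \<sigma> \<le> 1" .
qed



lemma bf_rank1:
  "bf n (mat n n (\<lambda>(p,q). B$$(p,q) - w p * cnj (w q))) x y
   = bf n B x y - (\<Sum>p<n. cnj (x p) * w p) * (\<Sum>q<n. cnj (w q) * y q)"
proof -
  have "bf n (mat n n (\<lambda>(p,q). B$$(p,q) - w p * cnj (w q))) x y
      = (\<Sum>p<n. \<Sum>q<n. cnj (x p) * B$$(p,q) * y q - (cnj (x p) * w p) * (cnj (w q) * y q))"
    unfolding bf_def by (intro sum.cong refl) (simp add: algebra_simps)
  also have "\<dots> = bf n B x y - (\<Sum>p<n. \<Sum>q<n. (cnj (x p) * w p) * (cnj (w q) * y q))"
    unfolding bf_def by (simp add: sum_subtractf)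
  also have "(\<Sum>p<n. \<Sum>q<n. (cnj (x p) * w p) * (cnj (w q) * y q))
      = (\<Sum>p<n. cnj (x p) * w p) * (\<Sum>q<n. cnj (w q) * y q)"
    by (rule sum_product[symmetric])
  finally show ?thesis .
qed

lemma psd_zero_diag: assumes p: "psd n B" and k: "k < n" and q: "q < n" and z: "Re (B$$(k,k)) = 0"
  shows "B$$(k,q) = 0" "B$$(q,k) = 0"
proof -
  have "(cmod (bf n B (delta k) (delta q)))^2 \<le> Re (bf n B (delta k) (delta k)) * Re (bf n B (delta q) (delta q))"
    by (rule psd_cs[OF p])
  hence "(cmod (B$$(k,q)))^2 \<le> 0" unfolding bf_delta[OF k q] bf_delta[OF k k] bf_delta[OF q q] z by simp
  thus "B$$(k,q) = 0" by simp
  have "B$$(q,k) = cnj (B$$(k,q))" using hermD[OF psd_herm[OF p] k q] .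
  thus "B$$(q,k) = 0" using \<open>B$$(k,q) = 0\<close> by simp
qed

lemma chol_aux:
  assumes "m \<le> n"
  shows "\<forall>B. psd n B \<longrightarrow> (\<forall>p<n. \<forall>q<n. (p < n - m \<or> q < n - m) \<longrightarrow> B$$(p,q) = 0)
          \<longrightarrow> (\<exists>W. \<forall>p<n. \<forall>q<n. B$$(p,q) = (\<Sum>r\<in>{n-m..<n}. W r p * cnj (W r q)))"
  using assms
proof (induction m)
  case 0
  show ?case by (intro allI impI exI[of _ "\<lambda>_ _. 0"]) auto
next
  case (Suc m)
  define k where "k = n - Suc m"
  have k: "k < n" and k1: "Suc k = n - m" and mn: "m \<le> n" using Suc.prems unfolding k_def by auto
  have IH: "\<And>B. psd n B \<Longrightarrow> (\<forall>p<n. \<forall>q<n. (p < Suc k \<or> q < Suc k) \<longrightarrow> B$$(p,q) = 0)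
          \<Longrightarrow> (\<exists>W. \<forall>p<n. \<forall>q<n. B$$(p,q) = (\<Sum>r\<in>{Suc k..<n}. W r p * cnj (W r q)))"
    using Suc.IH[OF mn] unfolding k1 by blast
  have split: "{k..<n} = insert k {Suc k..<n}" using k by auto
  show ?case unfolding k_def[symmetric]
  proof (intro allI impI)
    fix B assume p: "psd n B" and z: "\<forall>p<n. \<forall>q<n. (p < k \<or> q < k) \<longrightarrow> B$$(p,q) = 0"
    have h: "herm n B" by (rule psd_herm[OF p])
    have Bkk: "B$$(k,k) = of_real (Re (B$$(k,k)))"
      using psd_bf_real[OF p, of "delta k"] unfolding bf_delta[OF k k] .
    have Bkk0: "Re (B$$(k,k)) \<ge> 0" using psd_re_nonneg[OF p, of "delta k"] unfolding bf_delta[OF k k] .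
    show "\<exists>W. \<forall>p<n. \<forall>q<n. B$$(p,q) = (\<Sum>r\<in>{k..<n}. W r p * cnj (W r q))"
    proof (cases "Re (B$$(k,k)) = 0")
      case True
      have "\<forall>p<n. \<forall>q<n. (p < Suc k \<or> q < Suc k) \<longrightarrow> B$$(p,q) = 0"
      proof (intro allI impI)
        fix p' q' assume "p' < n" "q' < n" "p' < Suc k \<or> q' < Suc k"
        then show "B$$(p',q') = 0" using z psd_zero_diag[OF p k _ True]
          by (cases "p' = k"; cases "q' = k") auto
      qed
      then obtain W where W: "\<forall>p<n. \<forall>q<n. B$$(p,q) = (\<Sum>r\<in>{Suc k..<n}. W r p * cnj (W r q))"
        using IH[OF p] by blast
      show ?thesis
        by (rule exI[of _ "W(k := (\<lambda>_. 0))"]) (use W in \<open>simp add: split\<close>)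
    next
      case False
      hence bp: "Re (B$$(k,k)) > 0" using Bkk0 by simp
      define s where "s = sqrt (Re (B$$(k,k)))"
      have sp: "s > 0" unfolding s_def using bp by simp
      have ss: "s * s = Re (B$$(k,k))" unfolding s_def using bp by simp
      define w where "w p = B$$(p,k) / of_real s" for p
      define B' where "B' = mat n n (\<lambda>(p,q). B$$(p,q) - w p * cnj (w q))"
      have wk: "w k = of_real s" unfolding w_def using sp ss by (subst Bkk) (simp add: field_simps flip: of_real_mult)
      have cw: "cnj (w q) = B$$(k,q) / of_real s" if "q < n" for q
        unfolding w_def using hermD[OF h k that] by simp
      have wz: "w p = 0" if "p < k" "p < n" for p unfolding w_def using z that k by simp
      have alpha: "(\<Sum>q<n. cnj (w q) * x q) = bf n B (delta k) x / of_real s" for x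
        unfolding bf_delta_left[OF k] using cw by (simp add: sum_divide_distrib)
      have alpha2: "(\<Sum>p<n. cnj (x p) * w p) = cnj (bf n B (delta k) x / of_real s)" for x
        unfolding alpha[symmetric] by (simp add: mult.commute)
      have psdB': "psd n B'"
        unfolding psd_iff
      proof (intro conjI allI)
        show "B' \<in> carrier_mat n n" unfolding B'_def by simp
        fix x
        define a where "a = bf n B (delta k) x / of_real s"
        have e: "bf n B' x x = bf n B x x - of_real ((cmod a)^2)"
          unfolding B'_def bf_rank1 alpha alpha2 a_def[symmetric]
          by (metis complex_norm_square mult.commute of_real_power)
        have cs: "(cmod (bf n B (delta k) x))^2 \<le> Re (bf n B (delta k) (delta k)) * Re (bf n B x x)"
          by (rule psd_cs[OF p])
        have "(cmod a)^2 = (cmod (bf n B (delta k) x))^2 / (s * s)"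
          unfolding a_def using sp by (simp add: norm_divide power_divide power2_eq_square)
        also have "\<dots> \<le> Re (B$$(k,k)) * Re (bf n B x x) / (s * s)"
          using cs sp unfolding bf_delta[OF k k] by (intro divide_right_mono) auto
        also have "\<dots> = Re (bf n B x x)" unfolding ss using bp by simp
        finally have le: "(cmod a)^2 \<le> Re (bf n B x x)" .
        show "Im (bf n B' x x) = 0" unfolding e using psd_im[OF p] by simp
        show "Re (bf n B' x x) \<ge> 0" unfolding e using le by simp
      qed
      have zB': "\<forall>p<n. \<forall>q<n. (p < Suc k \<or> q < Suc k) \<longrightarrow> B'$$(p,q) = 0"
      proof (intro allI impI)
        fix p' q' assume p': "p' < n" and q': "q' < n" and pq: "p' < Suc k \<or> q' < Suc k"
        have ent: "B'$$(p',q') = B$$(p',q') - w p' * cnj (w q')" unfolding B'_def using p' q' by simp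
        show "B'$$(p',q') = 0"
        proof (cases "p' = k")
          case True
          have "w p' * cnj (w q') = B$$(k,q')" unfolding True wk cw[OF q'] using sp by simp
          thus ?thesis using ent True by simp
        next
          case pk: False
          show ?thesis
          proof (cases "q' = k")
            case True
            have "w p' * cnj (w q') = w p' * of_real s" using True wk by simp
            also have "\<dots> = B$$(p',k)" unfolding w_def using sp by simp
            finally have "w p' * cnj (w q') = B$$(p',k)" .
            thus ?thesis using ent True by simp
          next
            case False
            hence "p' < k \<or> q' < k" using pq pk by auto
            moreover have "w p' * cnj (w q') = 0" using calculation wz p' q' by auto
            ultimately show ?thesis unfolding ent using z p' q' by auto
          qed
        qed
      qed
      obtain W where W: "\<forall>p<n. \<forall>q<n. B'$$(p,q) = (\<Sum>r\<in>{Suc k..<n}. W r p * cnj (W r q))"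
        using IH[OF psdB' zB'] by blast
      show ?thesis
      proof (rule exI[of _ "W(k := w)"], intro allI impI)
        fix p' q' assume p': "p' < n" and q': "q' < n"
        have "B$$(p',q') = B'$$(p',q') + w p' * cnj (w q')" unfolding B'_def using p' q' by simp
        also have "\<dots> = (\<Sum>r\<in>{Suc k..<n}. W r p' * cnj (W r q')) + w p' * cnj (w q')" using W p' q' by simp
        also have "\<dots> = (\<Sum>r\<in>{k..<n}. (W(k := w)) r p' * cnj ((W(k := w)) r q'))"
          unfolding split by simp
        finally show "B$$(p',q') = (\<Sum>r\<in>{k..<n}. (W(k := w)) r p' * cnj ((W(k := w)) r q'))" .
      qed
    qed
  qed
qed

lemma cholesky: assumes "psd n B"
  shows "\<exists>W. \<forall>p<n. \<forall>q<n. B$$(p,q) = (\<Sum>r<n. W r p * cnj (W r q))"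
  using chol_aux[of n n] assms by (simp add: lessThan_atLeast0)



lemma sum_shift_ivl: "(\<Sum>I\<in>{a..<a+k}. g I) = (\<Sum>p<k. g (a + p :: nat))"
  by (induct k) (simp_all add: add.commute)

lemma sum_blocks: "(\<Sum>I<k*d. g I) = (\<Sum>a<k. \<Sum>p<d. g (a*d + p :: nat))"
proof -
  have "(\<Sum>I<k*d. g I) = (\<Sum>a<k. \<Sum>I\<in>{a*d..<a*d+d}. g I)"
    by (rule sum.nat_group[symmetric])
  also have "\<dots> = (\<Sum>a<k. \<Sum>p<d. g (a*d + p))" by (simp add: sum_shift_ivl)
  finally show ?thesis .
qed

definition blk :: "nat \<Rightarrow> complex mat \<Rightarrow> nat \<Rightarrow> nat \<Rightarrow> complex mat" where
  "blk d N a b = mat d d (\<lambda>(p,q). N$$(a*d+p, b*d+q))"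

lemma bf_blocks:
  "bf (k*d) N x y = (\<Sum>a<k. \<Sum>b<k. bf d (blk d N a b) (\<lambda>p. x (a*d+p)) (\<lambda>q. y (b*d+q)))"
proof -
  have "bf (k*d) N x y = (\<Sum>a<k. \<Sum>p<d. \<Sum>b<k. \<Sum>q<d. cnj (x (a*d+p)) * N$$(a*d+p, b*d+q) * y (b*d+q))"
    unfolding bf_def sum_blocks ..
  also have "\<dots> = (\<Sum>a<k. \<Sum>b<k. \<Sum>p<d. \<Sum>q<d. cnj (x (a*d+p)) * N$$(a*d+p, b*d+q) * y (b*d+q))"
    by (rule sum.cong[OF refl]) (rule sum.swap)
  also have "\<dots> = (\<Sum>a<k. \<Sum>b<k. bf d (blk d N a b) (\<lambda>p. x (a*d+p)) (\<lambda>q. y (b*d+q)))"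
    unfolding bf_def blk_def by (intro sum.cong refl) simp
  finally show ?thesis .
qed

lemma bf_mat_sum:
  "bf d (mat d d (\<lambda>(p,q). \<Sum>i\<in>I. m i * B i $$ (p,q))) x y = (\<Sum>i\<in>I. m i * bf d (B i) x y)"
proof -
  have "bf d (mat d d (\<lambda>(p,q). \<Sum>i\<in>I. m i * B i $$ (p,q))) x y
      = (\<Sum>p<d. \<Sum>q<d. \<Sum>i\<in>I. m i * (cnj (x p) * B i $$ (p,q) * y q))"
    unfolding bf_def by (intro sum.cong refl) (simp add: sum_distrib_left sum_distrib_right mult.assoc mult.left_commute)
  also have "\<dots> = (\<Sum>p<d. \<Sum>i\<in>I. \<Sum>q<d. m i * (cnj (x p) * B i $$ (p,q) * y q))"
    by (rule sum.cong[OF refl]) (rule sum.swap)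
  also have "\<dots> = (\<Sum>i\<in>I. \<Sum>p<d. \<Sum>q<d. m i * (cnj (x p) * B i $$ (p,q) * y q))"
    by (rule sum.swap)
  also have "\<dots> = (\<Sum>i\<in>I. m i * bf d (B i) x y)"
    unfolding bf_def by (simp add: sum_distrib_left)
  finally show ?thesis .
qed

definition zz :: "nat \<Rightarrow> (nat \<Rightarrow> nat \<Rightarrow> complex) \<Rightarrow> nat \<Rightarrow> (nat \<Rightarrow> complex) \<Rightarrow> complex" where
  "zz d W r x = (\<Sum>q<d. cnj (W r q) * x q)"

lemma bf_gram: assumes "\<forall>p<d. \<forall>q<d. B$$(p,q) = (\<Sum>r<d. W r p * cnj (W r q))"
  shows "bf d B x y = (\<Sum>r<d. cnj (zz d W r x) * zz d W r y)"
proof -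
  have "bf d B x y = (\<Sum>p<d. \<Sum>q<d. \<Sum>r<d. (cnj (x p) * W r p) * (cnj (W r q) * y q))"
    unfolding bf_def using assms by (intro sum.cong refl) (simp add: sum_distrib_left sum_distrib_right mult.assoc mult.left_commute)
  also have "\<dots> = (\<Sum>p<d. \<Sum>r<d. \<Sum>q<d. (cnj (x p) * W r p) * (cnj (W r q) * y q))"
    by (rule sum.cong[OF refl]) (rule sum.swap)
  also have "\<dots> = (\<Sum>r<d. \<Sum>p<d. \<Sum>q<d. (cnj (x p) * W r p) * (cnj (W r q) * y q))"
    by (rule sum.swap)
  also have "\<dots> = (\<Sum>r<d. (\<Sum>p<d. cnj (x p) * W r p) * (\<Sum>q<d. cnj (W r q) * y q))"
    by (simp add: sum_product)
  also have "\<dots> = (\<Sum>r<d. cnj (zz d W r x) * zz d W r y)"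
    unfolding zz_def by (simp add: mult.commute)
  finally show ?thesis .
qed

lemma sum4_swap: "(\<Sum>a\<in>A. \<Sum>b\<in>B. \<Sum>i\<in>C. \<Sum>r\<in>D. f a b i r) = (\<Sum>i\<in>C. \<Sum>r\<in>D. \<Sum>a\<in>A. \<Sum>b\<in>B. f a b i r)"
proof -
  have "(\<Sum>a\<in>A. \<Sum>b\<in>B. \<Sum>i\<in>C. \<Sum>r\<in>D. f a b i r) = (\<Sum>a\<in>A. \<Sum>i\<in>C. \<Sum>b\<in>B. \<Sum>r\<in>D. f a b i r)"
    by (rule sum.cong[OF refl]) (rule sum.swap)
  also have "\<dots> = (\<Sum>i\<in>C. \<Sum>a\<in>A. \<Sum>b\<in>B. \<Sum>r\<in>D. f a b i r)" by (rule sum.swap)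
  also have "\<dots> = (\<Sum>i\<in>C. \<Sum>a\<in>A. \<Sum>r\<in>D. \<Sum>b\<in>B. f a b i r)"
    by (intro sum.cong refl) (rule sum.swap)
  also have "\<dots> = (\<Sum>i\<in>C. \<Sum>r\<in>D. \<Sum>a\<in>A. \<Sum>b\<in>B. f a b i r)"
    by (rule sum.cong[OF refl]) (rule sum.swap)
  finally show ?thesis .
qed

definition mp_map :: "nat \<Rightarrow> (nat \<Rightarrow> complex mat) \<Rightarrow> complex mat \<Rightarrow> complex mat" where
  "mp_map d Bf X = mat d d (\<lambda>(p,q). \<Sum>i<d. X$$(i,i) * Bf i $$ (p,q))"

lemma blk_idx: assumes "a < k" "p < (d::nat)" shows "a*d + p < k*d"
proof -
  have "a*d + p < Suc a * d" using assms by simp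
  also have "Suc a * d \<le> k * d" using assms by (intro mult_le_mono1) simp
  finally show ?thesis .
qed

lemma blk_ampl: assumes d: "0 < d" and a: "a < k" and b: "b < k"
  and C: "E (blk d M a b) \<in> carrier_mat d d"
  shows "blk d (ampl d k E M) a b = E (blk d M a b)"
proof (rule eq_matI)
  fix p q assume p: "p < dim_row (E (blk d M a b))" and q: "q < dim_col (E (blk d M a b))"
  hence p': "p < d" and q': "q < d" using C by auto
  have ad: "a*d + p < k*d" using blk_idx[OF a p'] .
  have bd: "b*d + q < k*d" using blk_idx[OF b q'] .
  have e1: "(a*d+p) div d = a" "(a*d+p) mod d = p" "(b*d+q) div d = b" "(b*d+q) mod d = q"
    using p' q' d by auto
  show "blk d (ampl d k E M) a b $$ (p, q) = E (blk d M a b) $$ (p, q)"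
    using ad bd p' q' unfolding blk_def ampl_def by (simp add: e1)
qed (use C in \<open>auto simp: blk_def\<close>)



lemma mp_cp: assumes d: "0 < d" and B: "\<And>i. i < d \<Longrightarrow> psd d (Bf i)"
  shows "completely_positive d (mp_map d Bf)"
  unfolding completely_positive_def
proof (intro allI impI)
  fix k M assume pM: "psd (k*d) M"
  define E where "E = mp_map d Bf"
  have "\<forall>i. \<exists>Wi. i < d \<longrightarrow> (\<forall>p<d. \<forall>q<d. Bf i $$ (p,q) = (\<Sum>r<d. Wi r p * cnj (Wi r q)))"
    using cholesky B by blast
  then obtain W where W: "\<And>i. i < d \<Longrightarrow> \<forall>p<d. \<forall>q<d. Bf i $$ (p,q) = (\<Sum>r<d. W i r p * cnj (W i r q))"
    by metis
  define Z where "Z v i r a = zz d (W i) r (\<lambda>p. v (a*d+p))" for v :: "nat \<Rightarrow> complex" and i r a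
  have key: "bf (k*d) (ampl d k E M) v v = (\<Sum>i<d. \<Sum>r<d. bf (k*d) M (\<lambda>I. Z v i r (I div d) * delta i (I mod d)) (\<lambda>I. Z v i r (I div d) * delta i (I mod d)))" for v
  proof -
    have C: "E (blk d M a b) \<in> carrier_mat d d" for a b unfolding E_def mp_map_def by simp
    have "bf (k*d) (ampl d k E M) v v = (\<Sum>a<k. \<Sum>b<k. bf d (blk d (ampl d k E M) a b) (\<lambda>p. v (a*d+p)) (\<lambda>q. v (b*d+q)))"
      by (rule bf_blocks)
    also have "\<dots> = (\<Sum>a<k. \<Sum>b<k. bf d (E (blk d M a b)) (\<lambda>p. v (a*d+p)) (\<lambda>q. v (b*d+q)))"
    proof (intro sum.cong refl)
      fix a b assume "a \<in> {..<k}" "b \<in> {..<k}"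
      hence ak: "a < k" and bk: "b < k" by auto
      show "bf d (blk d (ampl d k E M) a b) (\<lambda>p. v (a*d+p)) (\<lambda>q. v (b*d+q))
          = bf d (E (blk d M a b)) (\<lambda>p. v (a*d+p)) (\<lambda>q. v (b*d+q))"
        using blk_ampl[where E=E and M=M, OF d ak bk C[of a b]] by simp
    qed
    also have "\<dots> = (\<Sum>a<k. \<Sum>b<k. \<Sum>i<d. \<Sum>r<d. M$$(a*d+i, b*d+i) * (cnj (Z v i r a) * Z v i r b))"
    proof (intro sum.cong refl)
      fix a b
      have "bf d (E (blk d M a b)) (\<lambda>p. v (a*d+p)) (\<lambda>q. v (b*d+q))
          = (\<Sum>i<d. blk d M a b $$ (i,i) * bf d (Bf i) (\<lambda>p. v (a*d+p)) (\<lambda>q. v (b*d+q)))"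
        unfolding E_def mp_map_def by (rule bf_mat_sum)
      also have "\<dots> = (\<Sum>i<d. \<Sum>r<d. M$$(a*d+i, b*d+i) * (cnj (Z v i r a) * Z v i r b))"
      proof (intro sum.cong refl)
        fix i assume "i \<in> {..<d}"
        hence i: "i < d" by simp
        show "blk d M a b $$ (i,i) * bf d (Bf i) (\<lambda>p. v (a*d+p)) (\<lambda>q. v (b*d+q))
            = (\<Sum>r<d. M$$(a*d+i, b*d+i) * (cnj (Z v i r a) * Z v i r b))"
          unfolding bf_gram[OF W[OF i]] Z_def using i by (simp add: blk_def sum_distrib_left)
      qed
      finally show "bf d (E (blk d M a b)) (\<lambda>p. v (a*d+p)) (\<lambda>q. v (b*d+q))
          = (\<Sum>i<d. \<Sum>r<d. M$$(a*d+i, b*d+i) * (cnj (Z v i r a) * Z v i r b))" .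
    qed
    also have "\<dots> = (\<Sum>i<d. \<Sum>r<d. \<Sum>a<k. \<Sum>b<k. M$$(a*d+i, b*d+i) * (cnj (Z v i r a) * Z v i r b))"
      by (rule sum4_swap)
    also have "\<dots> = (\<Sum>i<d. \<Sum>r<d. bf (k*d) M (\<lambda>I. Z v i r (I div d) * delta i (I mod d)) (\<lambda>I. Z v i r (I div d) * delta i (I mod d)))"
    proof (intro sum.cong refl)
      fix i r assume "i \<in> {..<d}" "r \<in> {..<d}"
      hence i: "i < d" by simp
      define y where "y = (\<lambda>I. Z v i r (I div d) * delta i (I mod d))"
      have "bf (k*d) M y y = (\<Sum>a<k. \<Sum>b<k. bf d (blk d M a b) (\<lambda>p. y (a*d+p)) (\<lambda>q. y (b*d+q)))"
        by (rule bf_blocks)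
      also have "\<dots> = (\<Sum>a<k. \<Sum>b<k. bf d (blk d M a b) (\<lambda>p. Z v i r a * delta i p) (\<lambda>q. Z v i r b * delta i q))"
      proof (intro sum.cong refl bf_cong)
        fix a b p assume "p < d"
        thus "y (a*d+p) = Z v i r a * delta i p" "y (b*d+p) = Z v i r b * delta i p"
          unfolding y_def using d by auto
      qed
      also have "\<dots> = (\<Sum>a<k. \<Sum>b<k. M$$(a*d+i, b*d+i) * (cnj (Z v i r a) * Z v i r b))"
        using i by (intro sum.cong refl) (simp add: bf_smult1 bf_smult2 bf_delta blk_def)
      finally show "(\<Sum>a<k. \<Sum>b<k. M$$(a*d+i, b*d+i) * (cnj (Z v i r a) * Z v i r b)) = bf (k*d) M y y" by simp
    qed
    finally show ?thesis .
  qed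
  show "psd (k*d) (ampl d k (mp_map d Bf) M)"
    unfolding E_def[symmetric] psd_iff
  proof (intro conjI allI)
    show "ampl d k E M \<in> carrier_mat (k*d) (k*d)" unfolding ampl_def by simp
    fix v
    show "Im (bf (k*d) (ampl d k E M) v v) = 0"
      unfolding key using psd_im[OF pM] by (simp add: Im_sum)
    show "Re (bf (k*d) (ampl d k E M) v v) \<ge> 0"
      unfolding key using psd_re_nonneg[OF pM] by (simp add: Re_sum sum_nonneg)
  qed
qed



lemma bf_scale: "bf n (mat n n (\<lambda>(i,j). a * B$$(i,j))) x y = a * bf n B x y"
  unfolding bf_def by (simp add: sum_distrib_left mult.assoc mult.left_commute)

lemma psd_scale: assumes "psd n B" "c \<ge> 0" shows "psd n (mat n n (\<lambda>(i,j). of_real c * B$$(i,j)))"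
  unfolding psd_iff bf_scale using assms psd_im[OF assms(1)] psd_re_nonneg[OF assms(1)] by simp

lemma shm_entry: "p < n \<Longrightarrow> q < n \<Longrightarrow> shm n c A $$ (p,q) = (if p = q then of_real c else 0) - A$$(p,q)"
  unfolding shm_def by simp

lemma sigma_id: assumes s: "\<sigma> \<in> states d" and d: "0 < d" and l: "lambda_max \<sigma> \<le> 1 / real d"
    and pq: "p < d" "q < d"
  shows "\<sigma>$$(p,q) = (if p = q then 1 / of_nat d else 0)"
proof -
  define T where "T = shm d (1 / real d) \<sigma>"
  have pT: "psd d T" unfolding T_def using psd_shm_iff[OF st_carrier[OF s] st_herm[OF s] d] l by simp
  have Tpp: "Re (T$$(p,p)) = 1 / real d - Re (\<sigma>$$(p,p))" if "p < d" for p
    unfolding T_def shm_entry[OF that that] by simp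
  have nn: "Re (T$$(p,p)) \<ge> 0" if "p < d" for p
    using psd_re_nonneg[OF pT, of "delta p"] unfolding bf_delta[OF that that] .
  have "(\<Sum>p<d. Re (T$$(p,p))) = (\<Sum>p<d. 1 / real d) - (\<Sum>p<d. Re (\<sigma>$$(p,p)))"
    using Tpp by (simp add: sum_subtractf)
  also have "\<dots> = 0" unfolding st_trace_re[OF s] using d by simp
  finally have "(\<Sum>p<d. Re (T$$(p,p))) = 0" .
  hence z: "Re (T$$(p,p)) = 0" if "p < d" for p
    using that nn by (subst (asm) sum_nonneg_eq_0_iff) auto
  have "T$$(p,q) = 0" using psd_zero_diag(1)[OF pT pq(1) pq(2) z[OF pq(1)]] .
  thus ?thesis unfolding T_def shm_entry[OF pq] by (auto simp: of_real_divide)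
qed

definition Bsig :: "nat \<Rightarrow> nat \<Rightarrow> complex mat \<Rightarrow> nat \<Rightarrow> complex mat" where
  "Bsig d k \<sigma> i = (if i < k then \<sigma> else
     mat d d (\<lambda>(p,q). of_real (real k / (real d - real k)) * shm d (1 / real k) \<sigma> $$ (p,q)))"

lemma mp_map_carrier: "mp_map d Bf X \<in> carrier_mat d d" unfolding mp_map_def by simp
lemma mp_dims [simp]: "dim_row (mp_map d Bf X) = d" "dim_col (mp_map d Bf X) = d" unfolding mp_map_def by simp_all
lemma mp_map_entry: "p < d \<Longrightarrow> q < d \<Longrightarrow> mp_map d Bf X $$ (p,q) = (\<Sum>i<d. X$$(i,i) * Bf i $$ (p,q))"
  unfolding mp_map_def by simp

lemma mp_linear: "linear_map d (mp_map d Bf)"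
  unfolding linear_map_def
proof (intro conjI ballI allI)
  fix A :: "complex mat" assume "A \<in> carrier_mat d d"
  show "mp_map d Bf A \<in> carrier_mat d d" by (rule mp_map_carrier)
next
  fix A B :: "complex mat" assume A: "A \<in> carrier_mat d d" and B: "B \<in> carrier_mat d d"
  show "mp_map d Bf (A + B) = mp_map d Bf A + mp_map d Bf B"
  proof (rule eq_matI)
    fix p q assume "p < dim_row (mp_map d Bf A + mp_map d Bf B)" "q < dim_col (mp_map d Bf A + mp_map d Bf B)"
    hence p: "p < d" and q: "q < d" by auto
    have "mp_map d Bf (A + B) $$ (p,q) = (\<Sum>i<d. (A$$(i,i) + B$$(i,i)) * Bf i $$ (p,q))"
      unfolding mp_map_entry[OF p q] using A B by (intro sum.cong refl) simp
    also have "\<dots> = mp_map d Bf A $$ (p,q) + mp_map d Bf B $$ (p,q)"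
      unfolding mp_map_entry[OF p q] by (simp add: distrib_right sum.distrib)
    also have "\<dots> = (mp_map d Bf A + mp_map d Bf B) $$ (p,q)"
      using p q mp_map_carrier[of d Bf] by simp
    finally show "mp_map d Bf (A + B) $$ (p,q) = (mp_map d Bf A + mp_map d Bf B) $$ (p,q)" .
  qed (use mp_map_carrier[of d Bf] in auto)
next
  fix A :: "complex mat" and c assume A: "A \<in> carrier_mat d d"
  show "mp_map d Bf (c \<cdot>\<^sub>m A) = c \<cdot>\<^sub>m mp_map d Bf A"
  proof (rule eq_matI)
    fix p q assume "p < dim_row (c \<cdot>\<^sub>m mp_map d Bf A)" "q < dim_col (c \<cdot>\<^sub>m mp_map d Bf A)"
    hence p: "p < d" and q: "q < d" by auto
    have "mp_map d Bf (c \<cdot>\<^sub>m A) $$ (p,q) = (\<Sum>i<d. c * (A$$(i,i) * Bf i $$ (p,q)))"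
      unfolding mp_map_entry[OF p q] using A by (intro sum.cong refl) simp
    also have "\<dots> = (c \<cdot>\<^sub>m mp_map d Bf A) $$ (p,q)"
      using p q by (simp add: mp_map_entry sum_distrib_left)
    finally show "mp_map d Bf (c \<cdot>\<^sub>m A) $$ (p,q) = (c \<cdot>\<^sub>m mp_map d Bf A) $$ (p,q)" .
  qed (use mp_map_carrier[of d Bf] in auto)
qed

lemma mp_tp: assumes "\<And>i. i < d \<Longrightarrow> (\<Sum>p<d. Bf i $$ (p,p)) = 1"
  shows "trace_preserving d (mp_map d Bf)"
  unfolding trace_preserving_def
proof
  fix A :: "complex mat" assume A: "A \<in> carrier_mat d d"
  have "mtrace (mp_map d Bf A) = (\<Sum>p<d. \<Sum>i<d. A$$(i,i) * Bf i $$ (p,p))"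
    unfolding mtrace_def using mp_map_carrier[of d Bf A] by (intro sum.cong) (auto simp: mp_map_entry)
  also have "\<dots> = (\<Sum>i<d. A$$(i,i) * (\<Sum>p<d. Bf i $$ (p,p)))"
    by (subst sum.swap) (simp add: sum_distrib_left)
  also have "\<dots> = (\<Sum>i<d. A$$(i,i))" using assms by simp
  also have "\<dots> = mtrace A" unfolding mtrace_def using A by simp
  finally show "mtrace (mp_map d Bf A) = mtrace A" .
qed



lemma sum_split_k: "(k::nat) \<le> d \<Longrightarrow> (\<Sum>i<d. f i) = (\<Sum>i<k. f i) + (\<Sum>i\<in>{k..<d}. f i)"
  using sum.atLeastLessThan_concat[of 0 k d f] by (simp add: lessThan_atLeast0)

lemma channel_exists:
  assumes d: "0 < d" and k1: "1 \<le> k" and kd: "k \<le> d" and s: "\<sigma> \<in> states d"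
    and l: "lambda_max \<sigma> \<le> 1 / real k"
  shows "\<exists>E. unital_cptp d E \<and> E ((1 / of_nat k) \<cdot>\<^sub>m proj d k) = \<sigma>"
proof -
  define Bf where "Bf = Bsig d k \<sigma>"
  define c where "c = real k / (real d - real k)"
  define E where "E = mp_map d Bf"
  have sc: "\<sigma> \<in> carrier_mat d d" by (rule st_carrier[OF s])
  have Bhi: "Bf i = mat d d (\<lambda>(p,q). of_real c * shm d (1 / real k) \<sigma> $$ (p,q))" if "\<not> i < k" for i
    unfolding Bf_def Bsig_def c_def using that by simp
  have Blo: "Bf i = \<sigma>" if "i < k" for i unfolding Bf_def Bsig_def using that by simp
  have psdB: "psd d (Bf i)" if i: "i < d" for i
  proof (cases "i < k")
    case True thus ?thesis using Blo st_psd[OF s] by simp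
  next
    case False
    hence "k < d" using i by simp
    hence c0: "c \<ge> 0" unfolding c_def by simp
    have "psd d (shm d (1 / real k) \<sigma>)"
      using psd_shm_iff[OF sc st_herm[OF s] d] l by simp
    thus ?thesis unfolding Bhi[OF False] by (rule psd_scale[OF _ c0])
  qed
  have trB: "(\<Sum>p<d. Bf i $$ (p,p)) = 1" if i: "i < d" for i
  proof (cases "i < k")
    case True thus ?thesis using Blo st_trace[OF s] by simp
  next
    case False
    hence kd': "k < d" using i by simp
    have "(\<Sum>p<d. Bf i $$ (p,p)) = (\<Sum>p<d. of_real c * (of_real (1 / real k) - \<sigma>$$(p,p)))"
      unfolding Bhi[OF False] by (intro sum.cong refl) (simp add: shm_entry)
    also have "\<dots> = of_real c * (of_nat d * of_real (1 / real k) - 1)"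
      unfolding sum_distrib_left[symmetric] sum_subtractf st_trace[OF s] by simp
    also have "\<dots> = of_real (c * (real d * (1 / real k) - 1))" by simp
    also have "c * (real d * (1 / real k) - 1) = 1" unfolding c_def using kd' k1 by (simp add: field_simps)
    finally show ?thesis by simp
  qed
  have unital: "E (1\<^sub>m d) = 1\<^sub>m d"
  proof (rule eq_matI)
    fix p q assume "p < dim_row (1\<^sub>m d)" "q < dim_col (1\<^sub>m d)"
    hence p: "p < d" and q: "q < d" by auto
    have "E (1\<^sub>m d) $$ (p,q) = (\<Sum>i<d. Bf i $$ (p,q))"
      unfolding E_def mp_map_entry[OF p q] by (intro sum.cong refl) simp
    also have "\<dots> = (if p = q then 1 else 0)"
    proof (cases "k = d")
      case True
      have "(\<Sum>i<d. Bf i $$ (p,q)) = (\<Sum>i<d. (if p = q then 1 / of_nat d else 0))"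
        using Blo sigma_id[OF s d _ p q] l True by (intro sum.cong refl) auto
      also have "\<dots> = (if p = q then 1 else 0)" using d by simp
      finally show ?thesis .
    next
      case False
      hence kd': "k < d" using kd by simp
      define e where "e = (if p = q then of_real (1 / real k) else (0::complex))"
      have "(\<Sum>i<d. Bf i $$ (p,q)) = (\<Sum>i<k. Bf i $$ (p,q)) + (\<Sum>i\<in>{k..<d}. Bf i $$ (p,q))"
        by (rule sum_split_k[OF kd])
      also have "(\<Sum>i<k. Bf i $$ (p,q)) = of_nat k * \<sigma>$$(p,q)" using Blo by simp
      also have "(\<Sum>i\<in>{k..<d}. Bf i $$ (p,q)) = (\<Sum>i\<in>{k..<d}. of_real c * (e - \<sigma>$$(p,q)))"
        using p q Bhi by (intro sum.cong refl) (simp add: shm_entry e_def)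
      also have "\<dots> = (of_nat (d - k) * of_real c) * (e - \<sigma>$$(p,q))" by simp
      also have "of_nat (d - k) * of_real c = (of_nat k :: complex)"
      proof -
        have "real (d - k) * c = real k" unfolding c_def using kd' by (simp add: of_nat_diff field_simps)
        hence "of_real (real (d - k) * c) = (of_real (real k) :: complex)" by (rule arg_cong)
        thus ?thesis unfolding of_real_mult of_real_of_nat_eq .
      qed
      also have "of_nat k * \<sigma>$$(p,q) + of_nat k * (e - \<sigma>$$(p,q)) = of_nat k * e" by (simp add: algebra_simps)
      also have "of_nat k * e = (if p = q then 1 else 0)" unfolding e_def using k1 by simp
      finally show ?thesis .
    qed
    also have "\<dots> = 1\<^sub>m d $$ (p,q)" using p q by simp
    finally show "E (1\<^sub>m d) $$ (p,q) = 1\<^sub>m d $$ (p,q)" .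
  qed (auto simp: E_def)
  have img: "E ((1 / of_nat k) \<cdot>\<^sub>m proj d k) = \<sigma>"
  proof (rule eq_matI)
    fix p q assume "p < dim_row \<sigma>" "q < dim_col \<sigma>"
    hence p: "p < d" and q: "q < d" using sc by auto
    have "E ((1 / of_nat k) \<cdot>\<^sub>m proj d k) $$ (p,q) = (\<Sum>i<d. (if i < k then (1 / of_nat k) * \<sigma>$$(p,q) else 0))"
      unfolding E_def mp_map_entry[OF p q] using Blo by (intro sum.cong refl) (simp add: proj_def)
    also have "\<dots> = (\<Sum>i<k. (1 / of_nat k) * \<sigma>$$(p,q))" unfolding sum_split_k[OF kd] by simp
    also have "\<dots> = \<sigma>$$(p,q)" using k1 by simp
    finally show "E ((1 / of_nat k) \<cdot>\<^sub>m proj d k) $$ (p,q) = \<sigma>$$(p,q)" .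
  qed (use sc in \<open>auto simp: E_def\<close>)
  have "unital_cptp d E"
    unfolding unital_cptp_def unital_def E_def
    using mp_linear mp_cp[of d Bf, OF d psdB] mp_tp[of d Bf, OF trB] unital unfolding E_def by blast
  thus ?thesis using img by blast
qed



lemma ampl1: assumes N: "N \<in> carrier_mat d d" and EN: "E N \<in> carrier_mat d d"
  shows "ampl d 1 E N = E N"
proof -
  have inner: "mat d d (\<lambda>(p,q). N $$ ((i div d) * d + p, (j div d) * d + q)) = N" if "i < d" "j < d" for i j
    using that N by (intro eq_matI) auto
  have inner2: "mat d d (($$) N) = N" using N by (intro eq_matI) auto
  show ?thesis
    using EN by (intro eq_matI) (auto simp: ampl_def inner inner2)
qed

lemma channel_bound:
  assumes d: "0 < d" and k1: "1 \<le> k" and kd: "k \<le> d" and E: "unital_cptp d E"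
    and s: "\<sigma> \<in> states d" and img: "E ((1 / of_nat k) \<cdot>\<^sub>m proj d k) = \<sigma>"
  shows "lambda_max \<sigma> \<le> 1 / real k"
proof -
  have lin: "linear_map d E" and cp: "completely_positive d E" and un: "E (1\<^sub>m d) = 1\<^sub>m d"
    using E unfolding unital_cptp_def unital_def by auto
  have Ec: "\<And>A. A \<in> carrier_mat d d \<Longrightarrow> E A \<in> carrier_mat d d"
    and Eadd: "\<And>A B. A \<in> carrier_mat d d \<Longrightarrow> B \<in> carrier_mat d d \<Longrightarrow> E (A + B) = E A + E B"
    and Esm: "\<And>A c. A \<in> carrier_mat d d \<Longrightarrow> E (c \<cdot>\<^sub>m A) = c \<cdot>\<^sub>m E A"
    using lin unfolding linear_map_def by auto
  have sc: "\<sigma> \<in> carrier_mat d d" by (rule st_carrier[OF s])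
  define P where "P = proj d k"
  define N where "N = mat d d (\<lambda>(i,j). if i = j \<and> k \<le> i then (1::complex) else 0)"
  have Pc: "P \<in> carrier_mat d d" unfolding P_def proj_def by simp
  have Nc: "N \<in> carrier_mat d d" unfolding N_def by simp
  have one: "1\<^sub>m d = N + P" unfolding N_def P_def proj_def by (intro eq_matI) auto
  have PX: "P = of_nat k \<cdot>\<^sub>m ((1 / of_nat k) \<cdot>\<^sub>m P)" using k1 Pc by (intro eq_matI) auto
  have EP: "E P = of_nat k \<cdot>\<^sub>m \<sigma>"
    by (subst PX, subst Esm) (use Pc img[folded P_def] in auto)
  have ENe: "E N $$ (p,q) = (if p = q then 1 else 0) - of_nat k * \<sigma>$$(p,q)" if p: "p < d" and q: "q < d" for p q
  proof -
    have "1\<^sub>m d = E N + of_nat k \<cdot>\<^sub>m \<sigma>" using un unfolding one Eadd[OF Nc Pc] EP by simp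
    hence "1\<^sub>m d $$ (p,q) = (E N + of_nat k \<cdot>\<^sub>m \<sigma>) $$ (p,q)" by simp
    also have "\<dots> = E N $$ (p,q) + of_nat k * \<sigma>$$(p,q)" using p q Ec[OF Nc] sc by simp
    finally show ?thesis using p q by simp
  qed
  have psdN: "psd (1*d) N"
    unfolding psd_iff
  proof (intro conjI allI)
    show "N \<in> carrier_mat (1*d) (1*d)" using Nc by simp
    fix x
    have "bf (1*d) N x x = (\<Sum>i<1*d. if k \<le> i then of_real ((cmod (x i))^2) else 0)"
      unfolding bf_def
    proof (intro sum.cong refl)
      fix i assume "i \<in> {..<1*d}"
      hence i: "i < d" by simp
      show "(\<Sum>j<1*d. cnj (x i) * N $$ (i, j) * x j) = (if k \<le> i then of_real ((cmod (x i))^2) else 0)"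
      proof (cases "k \<le> i")
        case True
        have "(\<Sum>j<1*d. cnj (x i) * N $$ (i, j) * x j) = (\<Sum>j<d. if j = i then cnj (x i) * x i else 0)"
          using True i by (intro sum.cong refl) (auto simp: N_def)
        also have "\<dots> = cnj (x i) * x i" using i by simp
        also have "\<dots> = of_real ((cmod (x i))^2)" by (metis complex_norm_square mult.commute of_real_power)
        finally show ?thesis using True by simp
      next
        case False
        thus ?thesis using i by (simp add: N_def)
      qed
    qed
    also have "\<dots> = of_real (\<Sum>i<d. if k \<le> i then (cmod (x i))^2 else 0)"
      by (simp add: if_distrib[of of_real] cong: if_cong)
    finally have e: "bf (1*d) N x x = of_real (\<Sum>i<d. if k \<le> i then (cmod (x i))^2 else 0)" .
    show "Im (bf (1*d) N x x) = 0" unfolding e by simp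
    show "Re (bf (1*d) N x x) \<ge> 0" unfolding e by (simp add: sum_nonneg)
  qed
  have "psd (1*d) (ampl d 1 E N)" using cp psdN unfolding completely_positive_def by blast
  hence pEN: "psd d (E N)" unfolding ampl1[where E=E, OF Nc Ec[OF Nc]] by simp
  have ENm: "E N = mat d d (\<lambda>(p,q). 1 * (1\<^sub>m d)$$(p,q) + (- of_nat k) * \<sigma>$$(p,q))"
    using Ec[OF Nc] ENe by (intro eq_matI) auto
  obtain u where nu: "nsq d u = 1" and eu: "\<And>i. i < d \<Longrightarrow> (\<Sum>j<d. \<sigma>$$(i,j) * u j) = of_real (lambda_max \<sigma>) * u i"
    using lmax[OF sc st_herm[OF s] d] by blast
  have buu: "bf d \<sigma> u u = of_real (lambda_max \<sigma>)" using bf_eig[OF sc eu] nu by simp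
  have "0 \<le> Re (bf d (E N) u u)" by (rule psd_re_nonneg[OF pEN])
  also have "bf d (E N) u u = 1 - of_nat k * of_real (lambda_max \<sigma>)"
    unfolding ENm bf_mat_comb nsq_bf nu buu by simp
  finally have "real k * lambda_max \<sigma> \<le> 1" by simp
  thus ?thesis using k1 by (simp add: field_simps)
qed

lemma converts_iff:
  assumes d: "0 < d" and k1: "1 \<le> k" and kd: "k \<le> d" and V: "V \<subseteq> states d"
  shows "converts d (Ccur d k) V \<longleftrightarrow> (\<exists>\<sigma>\<in>V. lambda_max \<sigma> \<le> 1 / real k)"
proof
  assume "converts d (Ccur d k) V"
  then obtain E where E: "unital_cptp d E" and m: "E ((1 / of_nat k) \<cdot>\<^sub>m proj d k) \<in> V"
    unfolding converts_def Ccur_def by auto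
  have "E ((1 / of_nat k) \<cdot>\<^sub>m proj d k) \<in> states d" using m V by auto
  from channel_bound[OF d k1 kd E this refl] m show "\<exists>\<sigma>\<in>V. lambda_max \<sigma> \<le> 1 / real k" by blast
next
  assume "\<exists>\<sigma>\<in>V. lambda_max \<sigma> \<le> 1 / real k"
  then obtain \<sigma> where s: "\<sigma> \<in> V" and l: "lambda_max \<sigma> \<le> 1 / real k" by blast
  obtain E where "unital_cptp d E" "E ((1 / of_nat k) \<cdot>\<^sub>m proj d k) = \<sigma>"
    using channel_exists[OF d k1 kd _ l] s V by blast
  then show "converts d (Ccur d k) V" unfolding converts_def Ccur_def using s by auto
qed

lemma maxmixed_state: assumes d: "0 < d" shows "(1 / of_nat d) \<cdot>\<^sub>m proj d d \<in> states d"
proof -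
  have e: "(1 / of_nat d) \<cdot>\<^sub>m proj d d = mat d d (\<lambda>(i,j). of_real (1 / real d) * (1\<^sub>m d)$$(i,j))"
    unfolding proj_def by (intro eq_matI) auto
  have "psd d ((1 / of_nat d) \<cdot>\<^sub>m proj d d)"
    unfolding e psd_iff bf_scale nsq_bf using nsq_nonneg by simp
  moreover have "mtrace ((1 / of_nat d) \<cdot>\<^sub>m proj d d) = 1"
    unfolding mtrace_def proj_def using d by simp
  ultimately show ?thesis unfolding states_def by simp
qed

lemma conv_states: assumes d: "0 < d" and c: "converts d (states d) V"
  shows "converts d (Ccur d d) V"
  using c maxmixed_state[OF d] unfolding converts_def Ccur_def by auto



lemma bf_tendsto: assumes "\<And>i j. i < n \<Longrightarrow> j < n \<Longrightarrow> (\<lambda>k. A k $$ (i,j)) \<longlonglongrightarrow> B $$ (i,j)"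
  shows "(\<lambda>k. bf n (A k) x y) \<longlonglongrightarrow> bf n B x y"
  unfolding bf_def by (intro tendsto_sum tendsto_mult tendsto_const assms) auto

lemma att:
  assumes d: "0 < d" and D: "continuous_metric_on_states d D"
    and ne: "eball d D \<epsilon> \<rho> \<noteq> {}" and rs: "\<rho> \<in> states d"
  shows "\<exists>\<sigma>0\<in>eball d D \<epsilon> \<rho>. \<forall>\<sigma>\<in>eball d D \<epsilon> \<rho>. lambda_max \<sigma>0 \<le> lambda_max \<sigma>"
proof -
  define V where "V = eball d D \<epsilon> \<rho>"
  have Vs: "V \<subseteq> states d" unfolding V_def eball_def by auto
  have VD: "\<And>\<sigma>. \<sigma> \<in> V \<Longrightarrow> D \<sigma> \<rho> \<le> \<epsilon>" unfolding V_def eball_def by auto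
  define L where "L = lambda_max ` V"
  have bdd: "bdd_below L" unfolding L_def bdd_below_def using st_lmax(2)[OF _ d] Vs
    by (intro exI[of _ 0]) (auto intro: less_imp_le)
  have Lne: "L \<noteq> {}" unfolding L_def V_def using ne by simp
  define lst where "lst = Inf L"
  have lower: "\<And>\<sigma>. \<sigma> \<in> V \<Longrightarrow> lst \<le> lambda_max \<sigma>" unfolding lst_def L_def
    using bdd by (auto intro: cInf_lower simp: L_def)
  have "\<exists>\<sigma>\<in>V. lambda_max \<sigma> < lst + inverse (real (Suc n))" for n
  proof -
    have "Inf L < lst + inverse (real (Suc n))" unfolding lst_def by simp
    then obtain y where "y \<in> L" "y < lst + inverse (real (Suc n))" using cInf_less_iff[OF Lne bdd] by blast
    then show ?thesis unfolding L_def by auto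
  qed
  then obtain X where XV: "\<And>n. X n \<in> V" and Xl: "\<And>n. lambda_max (X n) < lst + inverse (real (Suc n))"
    by metis
  have Xs: "X n \<in> states d" for n using XV Vs by auto
  obtain r where r: "strict_mono r" and rc: "\<forall>c\<in>{..<d} \<times> {..<d}. \<exists>l. (\<lambda>n. X (r n) $$ c) \<longlonglongrightarrow> l"
    using subseq_conv_complex[of "{..<d} \<times> {..<d}" "\<lambda>n c. X n $$ c" 1] st_entry[OF Xs] by fastforce
  define \<sigma> where "\<sigma> = mat d d (\<lambda>c. lim (\<lambda>n. X (r n) $$ c))"
  have conv: "(\<lambda>n. X (r n) $$ (i,j)) \<longlonglongrightarrow> \<sigma> $$ (i,j)" if ij: "i < d" "j < d" for i j
  proof -
    obtain l where "(\<lambda>n. X (r n) $$ (i,j)) \<longlonglongrightarrow> l" using rc ij by auto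
    thus ?thesis unfolding \<sigma>_def using ij by (simp add: limI)
  qed
  have sc: "\<sigma> \<in> carrier_mat d d" unfolding \<sigma>_def by simp
  have bfl: "(\<lambda>n. bf d (X (r n)) x y) \<longlonglongrightarrow> bf d \<sigma> x y" for x y by (rule bf_tendsto[OF conv])
  have psdS: "psd d \<sigma>"
    unfolding psd_iff
  proof (intro conjI allI sc)
    fix x
    have l: "(\<lambda>n. bf d (X (r n)) x x) \<longlonglongrightarrow> bf d \<sigma> x x" by (rule bfl)
    have "(\<lambda>n. Im (bf d (X (r n)) x x)) \<longlonglongrightarrow> Im (bf d \<sigma> x x)" by (rule tendsto_Im[OF l])
    moreover have "(\<lambda>n. Im (bf d (X (r n)) x x)) = (\<lambda>n. 0)" using psd_im[OF st_psd[OF Xs]] by simp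
    ultimately show "Im (bf d \<sigma> x x) = 0" using LIMSEQ_unique tendsto_const by metis
    have "(\<lambda>n. Re (bf d (X (r n)) x x)) \<longlonglongrightarrow> Re (bf d \<sigma> x x)" by (rule tendsto_Re[OF l])
    thus "Re (bf d \<sigma> x x) \<ge> 0"
      by (rule LIMSEQ_le_const) (use psd_re_nonneg[OF st_psd[OF Xs]] in auto)
  qed
  have "(\<lambda>n. \<Sum>i<d. X (r n) $$ (i,i)) \<longlonglongrightarrow> (\<Sum>i<d. \<sigma> $$ (i,i))"
    by (intro tendsto_sum conv) auto
  moreover have "(\<lambda>n. \<Sum>i<d. X (r n) $$ (i,i)) = (\<lambda>n. 1)" using st_trace[OF Xs] by simp
  ultimately have tr: "(\<Sum>i<d. \<sigma> $$ (i,i)) = 1" using LIMSEQ_unique tendsto_const by metis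
  have sS: "\<sigma> \<in> states d" unfolding states_def mtrace_def using psdS tr sc by simp
  have Dle: "D \<sigma> \<rho> \<le> \<epsilon>"
  proof (rule ccontr)
    assume "\<not> D \<sigma> \<rho> \<le> \<epsilon>"
    hence e: "D \<sigma> \<rho> - \<epsilon> > 0" by simp
    obtain \<delta> where \<delta>: "\<delta> > 0" and cont: "\<forall>x'\<in>states d. \<forall>y'\<in>states d.
        (\<forall>i<d. \<forall>j<d. cmod (x' $$ (i,j) - \<sigma> $$ (i,j)) < \<delta> \<and> cmod (y' $$ (i,j) - \<rho> $$ (i,j)) < \<delta>)
        \<longrightarrow> \<bar>D x' y' - D \<sigma> \<rho>\<bar> < D \<sigma> \<rho> - \<epsilon>"
      using D sS rs e unfolding continuous_metric_on_states_def by blast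
    have ev: "eventually (\<lambda>n. \<forall>c\<in>{..<d} \<times> {..<d}. cmod (X (r n) $$ c - \<sigma> $$ c) < \<delta>) sequentially"
    proof (rule eventually_ball_finite)
      show "finite ({..<d} \<times> {..<d})" by simp
      show "\<forall>c\<in>{..<d} \<times> {..<d}. eventually (\<lambda>n. cmod (X (r n) $$ c - \<sigma> $$ c) < \<delta>) sequentially"
      proof
        fix c assume "c \<in> {..<d} \<times> {..<d}"
        then obtain i j where c: "c = (i,j)" "i < d" "j < d" by auto
        have "eventually (\<lambda>n. dist (X (r n) $$ (i,j)) (\<sigma> $$ (i,j)) < \<delta>) sequentially"
          using tendstoD[OF conv[OF c(2,3)] \<delta>] .
        thus "eventually (\<lambda>n. cmod (X (r n) $$ c - \<sigma> $$ c) < \<delta>) sequentially"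
          unfolding c(1) dist_norm .
      qed
    qed
    then obtain N where N: "\<And>n. n \<ge> N \<Longrightarrow> \<forall>c\<in>{..<d} \<times> {..<d}. cmod (X (r n) $$ c - \<sigma> $$ c) < \<delta>"
      unfolding eventually_sequentially by blast
    define n where "n = N"
    have n: "\<forall>c\<in>{..<d} \<times> {..<d}. cmod (X (r n) $$ c - \<sigma> $$ c) < \<delta>" using N unfolding n_def by blast
    have cl: "\<forall>i<d. \<forall>j<d. cmod (X (r n) $$ (i,j) - \<sigma> $$ (i,j)) < \<delta> \<and> cmod (\<rho> $$ (i,j) - \<rho> $$ (i,j)) < \<delta>"
      using n \<delta> by simp
    have "\<bar>D (X (r n)) \<rho> - D \<sigma> \<rho>\<bar> < D \<sigma> \<rho> - \<epsilon>"
      using cont Xs rs cl by blast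
    moreover have "D (X (r n)) \<rho> \<le> \<epsilon>" using VD[OF XV] .
    ultimately show False by simp
  qed
  have sV: "\<sigma> \<in> V" unfolding V_def eball_def using sS Dle by simp
  have "psd d (shm d lst \<sigma>)"
    unfolding psd_iff
  proof (intro conjI allI)
    show "shm d lst \<sigma> \<in> carrier_mat d d" unfolding shm_def by simp
    fix x
    have e: "bf d (shm d lst \<sigma>) x x = of_real (lst * nsq d x) - bf d \<sigma> x x" unfolding bf_shm nsq_bf by simp
    show "Im (bf d (shm d lst \<sigma>) x x) = 0" unfolding e using psd_im[OF psdS] by simp
    define c where "c n = lst + inverse (real (Suc n))" for n
    have cl: "c \<longlonglongrightarrow> lst + 0" unfolding c_def by (intro tendsto_add tendsto_const LIMSEQ_inverse_real_of_nat)
    have pn: "psd d (shm d (c n) (X (r n)))" for n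
    proof -
      have "r n \<ge> n" using r by (rule seq_suble)
      hence "inverse (real (Suc (r n))) \<le> inverse (real (Suc n))" by (simp add: le_imp_inverse_le)
      hence "lambda_max (X (r n)) \<le> c n" using Xl[of "r n"] unfolding c_def by linarith
      thus ?thesis using psd_shm_iff[OF st_carrier[OF Xs] st_herm[OF Xs] d] by simp
    qed
    have nn: "0 \<le> c n * nsq d x - Re (bf d (X (r n)) x x)" for n
      using psd_re_nonneg[OF pn[of n], of x] unfolding bf_shm nsq_bf by simp
    have "(\<lambda>n. c n * nsq d x - Re (bf d (X (r n)) x x)) \<longlonglongrightarrow> (lst + 0) * nsq d x - Re (bf d \<sigma> x x)"
      by (intro tendsto_diff tendsto_mult tendsto_const cl tendsto_Re bfl)
    hence "0 \<le> (lst + 0) * nsq d x - Re (bf d \<sigma> x x)"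
      by (rule LIMSEQ_le_const) (use nn in auto)
    thus "Re (bf d (shm d lst \<sigma>) x x) \<ge> 0" unfolding e by simp
  qed
  hence "lambda_max \<sigma> \<le> lst" using psd_shm_iff[OF sc st_herm[OF sS] d] by simp
  hence "\<forall>\<sigma>'\<in>V. lambda_max \<sigma> \<le> lambda_max \<sigma>'" using lower by (auto intro: order.trans)
  thus ?thesis using sV unfolding V_def by blast
qed



theorem mainTheorem18:
  fixes d :: nat and D :: "complex mat \<Rightarrow> complex mat \<Rightarrow> real"
    and \<rho> :: "complex mat" and \<epsilon> :: real
  assumes "d \<ge> 1"
    and "continuous_metric_on_states d D"
    and "\<rho> \<in> states d"
    and "0 \<le> \<epsilon>" and "\<epsilon> \<le> 1"
  shows "cost d (eball d D \<epsilon> \<rho>)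
           = log 2 (real d) - (SUP \<sigma> \<in> eball d D \<epsilon> \<rho>. log 2 (of_int \<lfloor>2 powr Hmin \<sigma>\<rfloor>))
       \<and> log 2 (real d) - (SUP \<sigma> \<in> eball d D \<epsilon> \<rho>. log 2 (of_int \<lfloor>2 powr Hmin \<sigma>\<rfloor>))
           = log 2 (real d) - log 2 (of_int \<lfloor>2 powr Hmin_eps d D \<epsilon> \<rho>\<rfloor>)"
proof -
  have d: "0 < d" using assms(1) by simp
  note Dm = assms(2) and rs = assms(3)
  define V where "V = eball d D \<epsilon> \<rho>"
  have Vs: "V \<subseteq> states d" unfolding V_def eball_def by auto
  have "D \<rho> \<rho> = 0" using Dm rs unfolding continuous_metric_on_states_def by blast
  hence rV: "\<rho> \<in> V" unfolding V_def eball_def using rs assms(4) by simp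
  obtain \<sigma>0 where s0: "\<sigma>0 \<in> V" and mn: "\<And>\<sigma>. \<sigma> \<in> V \<Longrightarrow> lambda_max \<sigma>0 \<le> lambda_max \<sigma>"
    using att[OF d Dm _ rs, of \<epsilon>] rV unfolding V_def by blast
  have lpos: "0 < lambda_max \<sigma>" if "\<sigma> \<in> V" for \<sigma> using st_lmax(2)[OF _ d] that Vs by auto
  have lle1: "lambda_max \<sigma> \<le> 1" if "\<sigma> \<in> V" for \<sigma> using st_lmax(3)[OF _ d] that Vs by auto
  have lged: "1 \<le> real d * lambda_max \<sigma>" if "\<sigma> \<in> V" for \<sigma> using st_lmax(1)[OF _ d] that Vs by auto
  have pw: "2 powr Hmin \<sigma> = 1 / lambda_max \<sigma>" if "\<sigma> \<in> V" for \<sigma>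
    unfolding Hmin_def using lpos[OF that] by (simp add: powr_minus divide_inverse)
  define f where "f \<sigma> = \<lfloor>2 powr Hmin \<sigma>\<rfloor>" for \<sigma>
  have f1: "1 \<le> f \<sigma>" if "\<sigma> \<in> V" for \<sigma>
  proof -
    have "1 \<le> 1 / lambda_max \<sigma>" using lpos[OF that] lle1[OF that] by simp
    thus ?thesis unfolding f_def pw[OF that] by (simp add: le_floor_iff)
  qed
  have key: "lambda_max \<sigma> \<le> 1 / real k \<longleftrightarrow> int k \<le> f \<sigma>" if "\<sigma> \<in> V" "1 \<le> k" for \<sigma> k
  proof -
    have "int k \<le> f \<sigma> \<longleftrightarrow> real k \<le> 1 / lambda_max \<sigma>" unfolding f_def pw[OF that(1)] le_floor_iff by simp
    also have "\<dots> \<longleftrightarrow> lambda_max \<sigma> \<le> 1 / real k" using lpos[OF that(1)] that(2) by (simp add: field_simps)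
    finally show ?thesis by simp
  qed
  define M where "M = f \<sigma>0"
  have fM: "f \<sigma> \<le> M" if "\<sigma> \<in> V" for \<sigma>
  proof -
    have "1 / lambda_max \<sigma> \<le> 1 / lambda_max \<sigma>0" using mn[OF that] lpos s0 by (simp add: frac_le)
    thus ?thesis unfolding M_def f_def pw[OF that] pw[OF s0] by (rule floor_mono)
  qed
  have Md: "M \<le> int d"
  proof -
    have "1 / lambda_max \<sigma>0 \<le> real d" using lged[OF s0] lpos[OF s0] by (simp add: field_simps)
    hence "\<lfloor>1 / lambda_max \<sigma>0\<rfloor> \<le> \<lfloor>real d\<rfloor>" by (rule floor_mono)
    thus ?thesis unfolding M_def f_def pw[OF s0] by simp
  qed
  define m where "m = nat M"
  have mM: "int m = M" unfolding m_def using f1[OF s0] M_def by simp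
  have m1: "1 \<le> m" and md: "m \<le> d" using mM f1[OF s0] Md unfolding M_def by auto
  have K: "{k \<in> {1..d}. converts d (Ccur d k) V} = {1..m}"
  proof (intro equalityI subsetI)
    fix k assume "k \<in> {k \<in> {1..d}. converts d (Ccur d k) V}"
    hence k1: "1 \<le> k" and kd: "k \<le> d" and c: "converts d (Ccur d k) V" by auto
    obtain \<sigma> where "\<sigma> \<in> V" "lambda_max \<sigma> \<le> 1 / real k" using c converts_iff[OF d k1 kd Vs] by blast
    hence "int k \<le> M" using key fM k1 by (meson order.trans)
    thus "k \<in> {1..m}" using k1 mM by auto
  next
    fix k assume "k \<in> {1..m}"
    hence k1: "1 \<le> k" and km: "k \<le> m" by auto
    have kd: "k \<le> d" using km md by simp
    have "lambda_max \<sigma>0 \<le> 1 / real k" using key[OF s0 k1] km mM unfolding M_def by simp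
    hence "converts d (Ccur d k) V" using converts_iff[OF d k1 kd Vs] s0 by blast
    thus "k \<in> {k \<in> {1..d}. converts d (Ccur d k) V}" using k1 kd by simp
  qed
  define g where "g k = log 2 (real d) - log 2 (real k)" for k :: nat
  have gmono: "g m \<le> g k" if "k \<in> {1..m}" for k
    unfolding g_def using that by simp
  have cost: "cost d V = g m"
  proof -
    have "cost d V = Inf (g ` {1..m} \<union> (if converts d (states d) V then {0} else {}))"
      unfolding cost_def K[symmetric] g_def ..
    also have "\<dots> = g m"
    proof (rule cInf_eq_minimum)
      show "g m \<in> g ` {1..m} \<union> (if converts d (states d) V then {0} else {})" using m1 by simp
      fix x assume x: "x \<in> g ` {1..m} \<union> (if converts d (states d) V then {0} else {})"
      show "g m \<le> x"
      proof (cases "x \<in> g ` {1..m}")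
        case True thus ?thesis using gmono by auto
      next
        case False
        hence cv: "converts d (states d) V" and x0: "x = 0" using x by (auto split: if_splits)
        have "converts d (Ccur d d) V" by (rule conv_states[OF d cv])
        hence "d \<in> {1..m}" unfolding K[symmetric] using d by simp
        hence "m = d" using md by simp
        thus ?thesis unfolding x0 g_def by simp
      qed
    qed
    finally show ?thesis .
  qed
  have sup1: "(SUP \<sigma> \<in> V. log 2 (of_int (f \<sigma>))) = log 2 (real m)"
  proof (rule cSup_eq_maximum)
    show "log 2 (real m) \<in> (\<lambda>\<sigma>. log 2 (of_int (f \<sigma>))) ` V"
    proof -
      have fr: "real_of_int (f \<sigma>0) = real m" using mM unfolding M_def by (metis of_int_of_nat_eq)
      show ?thesis using s0 fr by (intro image_eqI[of _ _ \<sigma>0]) simp_all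
    qed
    fix x assume "x \<in> (\<lambda>\<sigma>. log 2 (of_int (f \<sigma>))) ` V"
    then obtain \<sigma> where s: "\<sigma> \<in> V" and x: "x = log 2 (of_int (f \<sigma>))" by auto
    have "real_of_int (f \<sigma>) \<le> real m" using fM[OF s] mM by simp
    moreover have "0 < real_of_int (f \<sigma>)" using f1[OF s] by simp
    ultimately show "x \<le> log 2 (real m)" unfolding x by simp
  qed
  have sup2: "Hmin_eps d D \<epsilon> \<rho> = Hmin \<sigma>0"
    unfolding Hmin_eps_def V_def[symmetric]
  proof (rule cSup_eq_maximum)
    show "Hmin \<sigma>0 \<in> Hmin ` V" using s0 by simp
    fix x assume "x \<in> Hmin ` V"
    then obtain \<sigma> where s: "\<sigma> \<in> V" and x: "x = Hmin \<sigma>" by auto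
    show "x \<le> Hmin \<sigma>0" unfolding x Hmin_def using mn[OF s] lpos[OF s] lpos[OF s0] by simp
  qed
  have e3: "log 2 (of_int \<lfloor>2 powr Hmin_eps d D \<epsilon> \<rho>\<rfloor>) = log 2 (real m)"
  proof -
    have "real_of_int \<lfloor>2 powr Hmin \<sigma>0\<rfloor> = real m" using mM unfolding M_def f_def by (metis of_int_of_nat_eq)
    thus ?thesis unfolding sup2 by simp
  qed
  show ?thesis
    using cost sup1 e3 unfolding V_def g_def f_def by simp
qed


end
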